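(* For $\alpha\in(0,\infty)$ and $p\in[0,\infty)$, as $n\to\infty$, $$\sum_{m=2}^{n-1}\frac{m^\alpha}{(n-m)(n-m+1)\log^p m}=\frac{n^\alpha}{\log^p n}\Big(1-\alpha\frac{\log n}{n}+\frac{\alpha\Psi(\alpha)+p}{n}+O\Big(\frac{1}{n\log n}\Big)\Big).$$
   Context: $\Psi$ denotes the digamma function (logarithmic derivative of the gamma function). *)

theory Defs
  imports "HOL-Analysis.Analysis" "HOL-Library.Landau_Symbols"
begin

end

theory Submission
  imports Defs "HOL-Real_Asymp.Real_Asymp"
begin
lemma exp_quad_bound:
  fixes z :: real assumes "z \<ge> 0"
  shows "0 \<le> exp z - 1 - z" "exp z - 1 - z \<le> z^2 * exp z"
proof -
  show "0 \<le> exp z - 1 - z" using exp_ge_add_one_self[of z] by linarith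
  have "exp (-z) \<ge> 1 - z" using exp_ge_add_one_self[of "-z"] by linarith
  hence "exp z * exp (-z) \<ge> exp z * (1 - z)" by (intro mult_left_mono) auto
  hence h: "exp z - 1 \<le> z * exp z" by (simp add: exp_minus field_simps)
  have "exp z - 1 - z \<le> z * (exp z - 1)" using h assms by (simp add: algebra_simps)
  also have "\<dots> \<le> z * (z * exp z)" using h assms by (intro mult_left_mono) auto
  finally show "exp z - 1 - z \<le> z^2 * exp z" by (simp add: power2_eq_square)
qed

lemma exp_minus_one_abs: fixes d :: real shows "\<bar>exp d - 1\<bar> \<le> \<bar>d\<bar> * exp \<bar>d\<bar>"
proof (cases "d \<ge> 0")
  case True
  have "exp (-d) \<ge> 1 - d" using exp_ge_add_one_self[of "-d"] by linarith
  hence "exp d * exp (-d) \<ge> exp d * (1 - d)" by (intro mult_left_mono) auto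
  hence "exp d - 1 \<le> d * exp d" by (simp add: exp_minus field_simps)
  then show ?thesis using True by auto
next
  case False
  have "1 - exp d \<le> - d" using exp_ge_add_one_self[of d] by linarith
  moreover have "-d * 1 \<le> -d * exp (-d)" using False by (intro mult_left_mono) auto
  moreover have "\<bar>exp d - 1\<bar> = 1 - exp d" using False by simp
  moreover have "\<bar>d\<bar> * exp \<bar>d\<bar> = -d * exp (-d)" using False by simp
  ultimately show ?thesis by linarith
qed

lemma ln1p_bound:
  fixes x :: real assumes "0 \<le> x"
  shows "0 \<le> x - ln (1 + x)" "x - ln (1 + x) \<le> x^2"
proof -
  show "0 \<le> x - ln (1 + x)" using ln_add_one_self_le_self[OF assms] by simp
  have "ln (1 + x) \<ge> 1 - 1 / (1 + x)"
    using ln_le_minus_one[of "1/(1+x)"] assms by (simp add: ln_div)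
  moreover have "x - (1 - 1/(1+x)) = x^2/(1+x)" using assms by (simp add: field_simps power2_eq_square)
  moreover have "x^2/(1+x) \<le> x^2" using assms by (simp add: divide_le_eq mult_le_cancel_left1)
  ultimately show "x - ln (1 + x) \<le> x^2" by linarith
qed

lemma ln1m_bound:
  fixes x :: real assumes "0 \<le> x" "x \<le> 1/2"
  shows "0 \<le> - ln (1 - x) - x" "- ln (1 - x) - x \<le> 2 * x^2"
proof -
  have "ln (1 - x) \<le> -x" using ln_le_minus_one[of "1 - x"] assms by simp
  thus "0 \<le> - ln (1 - x) - x" by simp
  have "\<bar>ln (1 + (-x)) - (-x)\<bar> \<le> 2 * (-x)^2" using assms by (intro abs_ln_one_plus_x_minus_x_bound) auto
  thus "- ln (1 - x) - x \<le> 2 * x^2" by simp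
qed

lemma ln_le_powr_eps:
  fixes y e :: real assumes "y > 0" "e > 0"
  shows "ln y \<le> y powr e / e"
proof -
  have "ln (y powr e) \<le> y powr e - 1" using ln_le_minus_one[of "y powr e"] assms by simp
  hence "e * ln y \<le> y powr e" using assms by (simp add: ln_powr)
  thus ?thesis using assms by (simp add: field_simps)
qed

lemma powr_step_bound:
  fixes m a :: real assumes "m \<ge> 1" "a > 0"
  shows "\<bar>(m+1) powr a - m powr a - a * m powr (a-1)\<bar> \<le> (a + a^2 * exp a) * m powr (a-2)"
proof -
  define x where "x = 1/m"
  have x0: "0 < x" "x \<le> 1" using assms by (auto simp: x_def)
  define z where "z = a * ln (1 + x)"
  have z0: "0 \<le> z" using x0 assms by (simp add: z_def)
  have lnb: "0 \<le> x - ln (1+x)" "x - ln (1+x) \<le> x^2" using ln1p_bound[of x] x0 by auto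
  have "ln (1+x) \<le> 1" using lnb x0 by linarith
  hence "a * ln (1+x) \<le> a * 1" using assms by (intro mult_left_mono) auto
  hence zle: "z \<le> a" by (simp add: z_def)
  have e1: "0 \<le> exp z - 1 - z" "exp z - 1 - z \<le> z^2 * exp z" using exp_quad_bound[OF z0] by auto
  have "z^2 \<le> (a*x)^2" using z0 lnb assms unfolding z_def
    by (intro power_mono) (auto intro!: mult_left_mono)
  hence "z^2 * exp z \<le> (a*x)^2 * exp a" using zle
    by (intro mult_mono) auto
  with e1 have E1: "\<bar>exp z - 1 - z\<bar> \<le> a^2 * x^2 * exp a" by (simp add: power_mult_distrib)
  have "z - a*x = - (a * (x - ln (1+x)))" by (simp add: z_def algebra_simps)
  moreover have "a * (x - ln (1+x)) \<le> a * x^2" using lnb assms by (intro mult_left_mono) auto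
  moreover have "0 \<le> a * (x - ln (1+x))" using lnb assms by simp
  ultimately have E2: "\<bar>z - a*x\<bar> \<le> a * x^2" by simp
  have E: "\<bar>exp z - 1 - a * x\<bar> \<le> (a + a^2 * exp a) * x^2"
  proof -
    have "(a + a^2 * exp a) * x^2 = a^2 * x^2 * exp a + a * x^2" by (simp add: algebra_simps)
    thus ?thesis using E1 E2 by linarith
  qed
  have mp: "m + 1 = m * (1 + x)" using assms by (simp add: x_def field_simps)
  have "(m+1) powr a = m powr a * exp z"
  proof -
    have "ln (m+1) = ln m + ln (1+x)" unfolding mp using assms x0 by (simp add: ln_mult)
    thus ?thesis using assms x0 by (simp add: z_def powr_def distrib_left exp_add)
  qed
  moreover have "m powr (a-1) = m powr a * x" using assms by (simp add: x_def powr_diff)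
  moreover have "m powr (a-2) = m powr a * x^2" using assms
    by (simp add: x_def powr_diff power2_eq_square powr_add[symmetric])
  ultimately have eq: "(m+1) powr a - m powr a - a * m powr (a-1) = m powr a * (exp z - 1 - a * x)"
    by (simp add: algebra_simps)
  have "\<bar>m powr a * (exp z - 1 - a * x)\<bar> = m powr a * \<bar>exp z - 1 - a * x\<bar>"
    by (simp add: abs_mult)
  also have "\<dots> \<le> m powr a * ((a + a^2 * exp a) * x^2)" using E by (intro mult_left_mono) auto
  also have "\<dots> = (a + a^2 * exp a) * m powr (a-2)"
    using \<open>m powr (a-2) = m powr a * x^2\<close> by simp
  finally show ?thesis using eq by simp
qed

lemma one_minus_powr_bound:
  fixes x a :: real assumes "0 \<le> x" "x \<le> 1/2" "a > 0"
  shows "0 \<le> 1 - (1-x) powr a" "1 - (1-x) powr a \<le> 2 * a * x"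
proof -
  have "(1-x) powr a \<le> 1 powr a" using assms by (intro powr_mono2) auto
  thus "0 \<le> 1 - (1-x) powr a" by simp
  have sq: "2*x^2 \<le> x" proof -
    have "x * (2*x) \<le> x * 1" using assms by (intro mult_left_mono) auto
    thus ?thesis by (simp add: power2_eq_square)
  qed
  have l: "ln (1-x) \<ge> -2*x" using ln1m_bound[OF assms(1,2)] sq by linarith
  have "(1-x) powr a = exp (a * ln (1-x))" using assms by (simp add: powr_def)
  also have "\<dots> \<ge> 1 + a * ln (1-x)" using exp_ge_add_one_self by blast
  finally have "(1-x) powr a \<ge> 1 + a * ln (1-x)" .
  moreover have "a * ln (1-x) \<ge> a * (-2*x)" using l assms by (intro mult_left_mono) auto
  ultimately show "1 - (1-x) powr a \<le> 2 * a * x" by linarith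
qed

lemma powr_neg_quad_bound:
  fixes t p :: real assumes "0 \<le> t" "t \<le> 1/2" "p \<ge> 0"
  shows "\<bar>(1 - t) powr (- p) - 1 - p * t\<bar> \<le> (2*p + 4*p^2*exp p) * t^2"
proof -
  define u where "u = - ln (1-t)"
  have ub: "0 \<le> u - t" "u - t \<le> 2*t^2" using ln1m_bound[OF assms(1,2)] by (auto simp: u_def)
  have sq: "2*t^2 \<le> t" proof -
    have "t * (2*t) \<le> t * 1" using assms by (intro mult_left_mono) auto
    thus ?thesis by (simp add: power2_eq_square)
  qed
  have u2: "u \<le> 2*t" using ub sq by linarith
  have u0: "0 \<le> u" using ub assms by linarith
  have pu0: "0 \<le> p*u" using u0 assms by simp
  have "u \<le> 1" using u2 assms by linarith
  hence "p*u \<le> p*1" using assms by (intro mult_left_mono) auto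
  hence pule: "p*u \<le> p" by simp
  have e1: "0 \<le> exp (p*u) - 1 - p*u" "exp (p*u) - 1 - p*u \<le> (p*u)^2 * exp (p*u)"
    using exp_quad_bound[OF pu0] by auto
  have "(p*u)^2 \<le> (p*(2*t))^2" using u0 u2 assms by (intro power_mono mult_left_mono) auto
  hence "(p*u)^2 * exp (p*u) \<le> (p*(2*t))^2 * exp p" using pule by (intro mult_mono) auto
  moreover have "(p*(2*t))^2 * exp p = 4 * p^2 * exp p * t^2" by (simp add: power_mult_distrib)
  ultimately have E1: "\<bar>exp (p*u) - 1 - p*u\<bar> \<le> 4 * p^2 * exp p * t^2" using e1 by simp
  have "p * (u - t) \<le> p * (2*t^2)" using ub assms by (intro mult_left_mono) auto
  moreover have "0 \<le> p * (u - t)" using ub assms by simp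
  ultimately have E2: "\<bar>p*u - p*t\<bar> \<le> 2 * p * t^2" by (simp add: right_diff_distrib)
  have "(1-t) powr (-p) = exp (p*u)" using assms by (simp add: powr_def u_def)
  moreover have "(2*p + 4*p^2*exp p) * t^2 = 4 * p^2 * exp p * t^2 + 2 * p * t^2" by (simp add: algebra_simps)
  moreover have "\<bar>exp (p*u) - 1 - p*t\<bar> \<le> \<bar>exp (p*u) - 1 - p*u\<bar> + \<bar>p*u - p*t\<bar>"
    using abs_triangle_ineq[of "exp (p*u) - 1 - p*u" "p*u - p*t"] by simp
  ultimately show ?thesis using E1 E2 by simp
qed

lemma telescope_rate:
  fixes x :: "nat \<Rightarrow> real"
  assumes step: "\<And>n. n \<ge> 1 \<Longrightarrow> \<bar>x (Suc n) - x n\<bar> \<le> C * (1/n - 1/(Suc n))"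
  shows "\<exists>l. x \<longlonglongrightarrow> l \<and> (\<forall>n\<ge>1. \<bar>x n - l\<bar> \<le> C / n)"
proof -
  have "0 \<le> C * (1/real 1 - 1/real (Suc 1))" using step[of 1] abs_ge_zero order_trans by blast
  hence C0: "C \<ge> 0" by simp
  have key: "\<bar>x (n+k) - x n\<bar> \<le> C * (1/n - 1/(n+k))" if n: "n \<ge> 1" for n k
  proof (induction k)
    case 0 then show ?case by simp
  next
    case (Suc k)
    have "\<bar>x (Suc (n+k)) - x (n+k)\<bar> \<le> C * (1/(n+k) - 1/(Suc (n+k)))" using step[of "n+k"] n by simp
    with Suc show ?case by (simp add: algebra_simps)
  qed
  have key2: "\<bar>x m - x n\<bar> \<le> C / n" if "n \<ge> 1" "m \<ge> n" for m n
  proof -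
    have "\<bar>x (n + (m-n)) - x n\<bar> \<le> C * (1/n - 1/(real n + real (m-n)))" using key that(1) by blast
    moreover have "C * (1/n - 1/(real n + real (m-n))) \<le> C * (1/n)" using C0 by (intro mult_left_mono) auto
    ultimately show ?thesis using that by simp
  qed
  have "Cauchy x"
  proof (rule CauchyI)
    fix e :: real assume e: "0 < e"
    obtain M :: nat where M: "M > 2 * C / e" using reals_Archimedean2 by blast
    define M' where "M' = Suc M"
    have M'1: "M' \<ge> 1" by (simp add: M'_def)
    have "2 * C / e < M'" using M by (simp add: M'_def)
    hence "2 * C < e * M'" using e by (simp add: field_simps)
    hence CM: "2 * (C / M') < e" using M'1 by (simp add: field_simps)
    show "\<exists>M. \<forall>m\<ge>M. \<forall>n\<ge>M. norm (x m - x n) < e"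
    proof (intro exI allI impI)
      fix m n assume "m \<ge> M'" "n \<ge> M'"
      hence "\<bar>x m - x M'\<bar> \<le> C / M'" "\<bar>x n - x M'\<bar> \<le> C / M'" using key2 M'1 by auto
      thus "norm (x m - x n) < e" using CM by simp
    qed
  qed
  then obtain l where l: "x \<longlonglongrightarrow> l" using Cauchy_convergent_iff convergent_def by blast
  have "\<bar>x n - l\<bar> \<le> C / n" if "n \<ge> 1" for n
  proof -
    have "(\<lambda>k. \<bar>x (k + n) - x n\<bar>) \<longlonglongrightarrow> \<bar>l - x n\<bar>"
      by (intro tendsto_intros LIMSEQ_ignore_initial_segment l)
    moreover have "\<forall>k\<ge>0. \<bar>x (k + n) - x n\<bar> \<le> C / n" using key2 that by simp
    ultimately have "\<bar>l - x n\<bar> \<le> C / n" by (intro LIMSEQ_le_const2) auto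
    thus ?thesis by simp
  qed
  with l show ?thesis by blast
qed

lemma inv_sq_le: assumes "n \<ge> 1" shows "1 / (real n)^2 \<le> 2 * (1/n - 1/(Suc n))"
proof -
  have e: "1/n - 1/(Suc n) = 1/(real n*(n+1))" using assms by (simp add: field_simps)
  have "real n * (n+1) \<le> 2 * (real n * n)" using assms by (simp add: algebra_simps)
  hence "1/(2 * (real n * n)) \<le> 1/(real n*(n+1))" using assms by (intro frac_le) auto
  thus ?thesis unfolding e by (simp add: power2_eq_square)
qed

lemma digamma_rate:
  fixes a :: real assumes a: "a > 0"
  shows "\<forall>n\<ge>1. \<bar>(\<Sum>j<n. 1/(a + real j)) - ln (real n) + Digamma a\<bar> \<le> 2*(a+1) / n"
proof -
  define x where "x n = (\<Sum>j<n. 1/(a + real j)) - ln (real n)" for n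
  have st: "\<bar>x (Suc n) - x n\<bar> \<le> 2*(a+1) * (1/n - 1/(Suc n))" if n: "n \<ge> 1" for n
  proof -
    define y where "y = 1 / real n"
    have y0: "0 < y" using n by (simp add: y_def)
    have "ln (real (Suc n)) = ln (real n) + ln (1 + y)"
    proof -
      have "real (Suc n) = real n * (1 + y)" using n by (simp add: y_def field_simps)
      thus ?thesis using n y0 by (simp add: ln_mult)
    qed
    hence d: "x (Suc n) - x n = 1/(a + n) - ln (1 + y)" by (simp add: x_def)
    have lb: "0 \<le> y - ln (1+y)" "y - ln (1+y) \<le> y^2" using ln1p_bound[of y] y0 by auto
    have "1/(a+n) \<le> y" using n a by (simp add: y_def field_simps)
    moreover have "y - 1/(a+n) \<le> a * y^2"
    proof -
      have "y - 1/(a+n) = a / (real n * (a + n))" using n a by (simp add: y_def field_simps)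
      also have "\<dots> \<le> a / (real n * n)" using n a by (intro divide_left_mono mult_left_mono) auto
      finally show ?thesis by (simp add: y_def power2_eq_square)
    qed
    ultimately have "\<bar>x (Suc n) - x n\<bar> \<le> (a+1) * y^2" using d lb by (simp add: algebra_simps abs_le_iff) 
    also have "\<dots> \<le> (a+1) * (2 * (1/n - 1/(Suc n)))" using inv_sq_le[OF n] a
      by (intro mult_left_mono) (auto simp: y_def power_divide)
    also have "\<dots> = 2*(a+1) * (1/n - 1/(Suc n))" by (simp add: algebra_simps add_divide_distrib)
    finally show ?thesis .
  qed
  obtain l where l: "x \<longlonglongrightarrow> l" "\<forall>n\<ge>1. \<bar>x n - l\<bar> \<le> 2*(a+1) / n"
    using telescope_rate[of x, OF st] by blast
  have "(\<lambda>m. of_real (ln (real m)) - (\<Sum>n<m. inverse (a + of_nat n))) \<longlonglongrightarrow> Digamma a"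
    using a by (intro Digamma_LIMSEQ) auto
  hence "(\<lambda>m. - x m) \<longlonglongrightarrow> Digamma a" by (simp add: x_def divide_inverse)
  moreover have "(\<lambda>m. - x m) \<longlonglongrightarrow> - l" using l(1) by (intro tendsto_intros)
  ultimately have "l = - Digamma a" using LIMSEQ_unique by fastforce
  thus ?thesis using l(2) by (simp add: x_def)
qed

definition cc :: "real \<Rightarrow> nat \<Rightarrow> real" where "cc a m = pochhammer a m / fact m"

lemma cc_0 [simp]: "cc a 0 = 1" by (simp add: cc_def)
lemma cc_Suc: "cc a (Suc m) = cc a m * (a + m) / (m + 1)"
  by (simp add: cc_def pochhammer_Suc field_simps)
lemma cc_pos: "a > 0 \<Longrightarrow> cc a m > 0"
  by (induction m) (auto simp: cc_Suc)

lemma cc_conv: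
  fixes a :: real assumes a: "a > 0"
  shows "(\<Sum>m<n. cc a m / (real n - real m)) = cc a n * (\<Sum>j<n. 1/(a + real j))"
proof (induction n)
  case 0 then show ?case by simp
next
  case (Suc n)
  define S where "S k = (\<Sum>m<k. cc a m / (real k - real m))" for k
  have rec: "(n+1) * S (Suc n) = (n + a) * S n + cc a n"
  proof -
    have "(n+1) * S (Suc n) = (\<Sum>m<Suc n. cc a m * ((n+1) / (real (Suc n) - real m)))"
      by (simp add: S_def sum_distrib_left field_simps)
    also have "\<dots> = (\<Sum>m<Suc n. cc a m + cc a m * m / (real (Suc n) - real m))"
    proof (intro sum.cong refl)
      fix m assume "m \<in> {..<Suc n}"
      hence "real (Suc n) - real m > 0" by simp
      thus "cc a m * ((n+1) / (real (Suc n) - real m)) = cc a m + cc a m * m / (real (Suc n) - real m)"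
        by (simp add: field_simps)
    qed
    also have "\<dots> = (\<Sum>m<Suc n. cc a m) + (\<Sum>m<Suc n. cc a m * m / (real (Suc n) - real m))"
      by (simp add: sum.distrib)
    also have "(\<Sum>m<Suc n. cc a m * m / (real (Suc n) - real m)) = (\<Sum>j<n. (a + j) * cc a j / (real n - real j))"
    proof -
      have "(\<Sum>m<Suc n. cc a m * m / (real (Suc n) - real m)) = (\<Sum>j<n. cc a (Suc j) * real (Suc j) / (real (Suc n) - real (Suc j)))"
        by (subst sum.lessThan_Suc_shift) simp
      also have "\<dots> = (\<Sum>j<n. (a + j) * cc a j / (real n - real j))"
      proof (intro sum.cong refl)
        fix j assume "j \<in> {..<n}"
        have "cc a (Suc j) * real (Suc j) = (a + j) * cc a j" by (simp add: cc_Suc field_simps)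
        moreover have "real (Suc n) - real (Suc j) = real n - real j" by simp
        ultimately show "cc a (Suc j) * real (Suc j) / (real (Suc n) - real (Suc j)) = (a + j) * cc a j / (real n - real j)" by simp
      qed
      finally show ?thesis .
    qed
    also have "\<dots> = (\<Sum>j<n. (n + a) * cc a j / (real n - real j) - cc a j)"
    proof (intro sum.cong refl)
      fix j assume "j \<in> {..<n}"
      hence "real n - real j > 0" by simp
      thus "(a + j) * cc a j / (real n - real j) = (n + a) * cc a j / (real n - real j) - cc a j"
        by (simp add: field_simps)
    qed
    also have "\<dots> = (n + a) * S n - (\<Sum>j<n. cc a j)"
      by (simp add: S_def sum_subtractf sum_distrib_left)
    finally show ?thesis by simp
  qed
  define H where "H = (\<Sum>j<n. 1/(a + real j))"
  have "S n = cc a n * H" using Suc by (simp add: S_def H_def)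
  hence "(n+1) * S (Suc n) = (n + a) * cc a n * H + cc a n" using rec by simp
  also have "\<dots> = cc a n * (a+n) * (H + 1/(a+n))"
  proof -
    have "a + real n \<noteq> 0" using a by simp
    hence "cc a n * (a+n) * (1/(a+n)) = cc a n" by simp
    thus ?thesis by (simp add: distrib_left algebra_simps)
  qed
  also have "\<dots> = (n+1) * (cc a (Suc n) * (\<Sum>j<Suc n. 1/(a + real j)))"
    by (simp add: cc_Suc H_def)
  finally show ?case by (simp add: S_def)
qed

lemma cc_asym:
  fixes a :: real assumes a: "a > 0"
  shows "\<exists>K C. K > 0 \<and> C \<ge> 0 \<and> (\<forall>m\<ge>1. \<bar>K * cc a m - real m powr (a-1)\<bar> \<le> C * real m powr (a-2))"
proof -
  define y where "y m = ln (cc a m) + (1 - a) * ln (real m)" for m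
  have st: "\<bar>y (Suc m) - y m\<bar> \<le> 2*(a+a^2) * (1/m - 1/(Suc m))" if m: "m \<ge> 1" for m
  proof -
    define v where "v = 1 / real m"
    have v0: "0 < v" using m by (simp add: v_def)
    have av: "0 < a * v" using v0 a by simp
    have e1: "real (Suc m) = real m * (1 + v)" using m by (simp add: v_def field_simps)
    have e2: "a + real m = real m * (1 + a * v)" using m by (simp add: v_def field_simps)
    have "cc a (Suc m) = cc a m * (a + m) / (m + 1)" by (rule cc_Suc)
    hence "ln (cc a (Suc m)) = ln (cc a m) + ln (a + m) - ln (m+1)"
      using cc_pos[OF a, of m] a by (simp add: ln_div ln_mult)
    hence yd: "y (Suc m) - y m = ln (a + m) - ln (real m + 1) + (1-a) * (ln (real m + 1) - ln m)"
      by (simp add: y_def algebra_simps)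
    have f1: "ln (a + m) = ln m + ln (1 + a * v)" using m av by (simp add: e2 ln_mult)
    have f2: "ln (real m + 1) = ln m + ln (1 + v)" proof -
      have "real m + 1 = real m * (1 + v)" using m by (simp add: v_def field_simps)
      thus ?thesis using m v0 by (simp add: ln_mult)
    qed
    have d: "y (Suc m) - y m = ln (1 + a * v) - a * ln (1 + v)" unfolding yd f1 f2 by (simp add: algebra_simps)
    have l1: "0 \<le> a * v - ln (1 + a * v)" "a * v - ln (1 + a * v) \<le> (a * v)^2" using ln1p_bound[of "a * v"] av by auto
    have l2: "0 \<le> v - ln (1 + v)" "v - ln (1 + v) \<le> v^2" using ln1p_bound[of v] v0 by auto
    have l2': "0 \<le> a * (v - ln (1 + v))" "a * (v - ln (1 + v)) \<le> a * v^2"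
      using l2 a by (auto intro: mult_left_mono)
    have "\<bar>y (Suc m) - y m\<bar> \<le> (a + a^2) * v^2" using l1 l2' unfolding d
      by (simp add: abs_le_iff algebra_simps power_mult_distrib)
    also have "\<dots> \<le> (a + a^2) * (2 * (1/m - 1/(Suc m)))" using inv_sq_le[OF m] a
      by (intro mult_left_mono) (auto simp: v_def power_divide)
    also have "\<dots> = 2*(a+a^2) * (1/m - 1/(Suc m))" by (simp add: algebra_simps add_divide_distrib)
    finally show ?thesis .
  qed
  obtain l where l: "y \<longlonglongrightarrow> l" "\<forall>n\<ge>1. \<bar>y n - l\<bar> \<le> 2*(a+a^2) / n"
    using telescope_rate[of y, OF st] by blast
  define C0 where "C0 = 2*(a+a^2)"
  have C00: "C0 \<ge> 0" using a by (simp add: C0_def)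
  show ?thesis
  proof (intro exI conjI allI impI)
    show "exp (-l) > 0" by simp
    show "C0 * exp C0 \<ge> 0" using C00 by simp
    fix m :: nat assume m: "m \<ge> 1"
    define d where "d = y m - l"
    have dl: "\<bar>d\<bar> \<le> C0 / m" using l(2) m by (simp add: d_def C0_def)
    have "C0 / m \<le> C0 / 1" using C00 m by (intro divide_left_mono) auto
    hence dl1: "\<bar>d\<bar> \<le> C0" using dl by simp
    have "exp (-l) * cc a m = real m powr (a-1) * exp d"
    proof -
      have "exp (y m) = cc a m * real m powr (1 - a)" using cc_pos[OF a, of m] m
        by (simp add: y_def exp_add powr_def)
      hence "exp d = exp (-l) * cc a m * real m powr (1-a)" by (simp add: d_def exp_diff exp_minus field_simps)
      hence "real m powr (a-1) * exp d = exp (-l) * cc a m * (real m powr (1-a) * real m powr (a-1))" by simp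
      also have "real m powr (1-a) * real m powr (a-1) = 1" using m by (simp add: powr_add[symmetric])
      finally show ?thesis by simp
    qed
    hence "exp (-l) * cc a m - real m powr (a-1) = real m powr (a-1) * (exp d - 1)"
      by (simp add: algebra_simps)
    hence "\<bar>exp (-l) * cc a m - real m powr (a-1)\<bar> = real m powr (a-1) * \<bar>exp d - 1\<bar>"
      by (simp add: abs_mult)
    also have "\<dots> \<le> real m powr (a-1) * (\<bar>d\<bar> * exp \<bar>d\<bar>)" by (intro mult_left_mono exp_minus_one_abs) auto
    also have "\<dots> \<le> real m powr (a-1) * ((C0 / m) * exp C0)" using dl dl1 
      by (intro mult_left_mono mult_mono) auto
    also have "\<dots> = C0 * exp C0 * (real m powr (a-1) / m)" by simp
    also have "real m powr (a-1) / m = real m powr (a-2)" using m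
      by (simp add: powr_diff[symmetric] powr_add[symmetric] divide_powr_uminus powr_minus_divide) (simp add: powr_diff power2_eq_square)
    finally show "\<bar>exp (-l) * cc a m - real m powr (a-1)\<bar> \<le> C0 * exp C0 * real m powr (a-2)" .
  qed
qed

lemma sbp:
  fixes f :: "nat \<Rightarrow> real" and n b :: nat
  assumes "2 \<le> b"
  shows "b < n \<Longrightarrow> (\<Sum>m=2..b. f m * (1/(real n - m) - 1/(real n - m + 1))) =
           f b / (real n - b) - f 2 / (real n - 1) - (\<Sum>m=2..<b. (f (Suc m) - f m) / (real n - m))"
  using assms
proof (induction b rule: nat_induct_at_least)
  case base
  then show ?case by (simp add: algebra_simps diff_divide_distrib)
next
  case (Suc b)
  hence IH: "(\<Sum>m=2..b. f m * (1/(real n - m) - 1/(real n - m + 1))) =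
           f b / (real n - b) - f 2 / (real n - 1) - (\<Sum>m=2..<b. (f (Suc m) - f m) / (real n - m))" by simp
  have e: "real n - real (Suc b) + 1 = real n - b" by simp
  have L: "(\<Sum>m=2..Suc b. f m * (1/(real n - m) - 1/(real n - m + 1))) =
     (\<Sum>m=2..b. f m * (1/(real n - m) - 1/(real n - m + 1))) + f (Suc b) * (1/(real n - Suc b) - 1/(real n - Suc b + 1))"
    using Suc.hyps by simp
  have T: "f (Suc b) * (1/(real n - Suc b) - 1/(real n - Suc b + 1)) = f (Suc b) / (real n - Suc b) - f (Suc b) / (real n - b)"
    unfolding e by (simp add: right_diff_distrib)
  have R: "(\<Sum>m=2..<Suc b. (f (Suc m) - f m) / (real n - m)) = (\<Sum>m=2..<b. (f (Suc m) - f m) / (real n - m)) + (f (Suc b) / (real n - b) - f b / (real n - b))"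
    using Suc.hyps by (simp add: diff_divide_distrib)
  show ?case unfolding L R T IH by simp
qed

lemma harm_le_ln: "n \<ge> 1 \<Longrightarrow> harm n \<le> 1 + ln (real n)"
  using euler_mascheroni_sequence_decreasing[of 1 n] by (simp add: harm_def)

lemma powr_le_ub:
  fixes m n a :: real assumes "1 \<le> m" "m \<le> n" "a > 0"
  shows "m powr (a - 1) \<le> 1 + n powr (a - 1)"
proof (cases "a \<le> 1")
  case True
  have "m powr (a-1) \<le> 1 powr (a-1)" using assms True by (intro powr_mono2') auto
  hence h: "m powr (a-1) \<le> 1" by simp
  have "0 \<le> n powr (a-1)" by simp
  with h show ?thesis by linarith
next
  case False
  have "m powr (a-1) \<le> n powr (a-1)" using assms False by (intro powr_mono2) auto
  then show ?thesis by simp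
qed

lemma conv_term_bound:
  fixes m n a :: real assumes "1 \<le> m" "m + 1 \<le> n" "a > 0"
  shows "m powr (a - 2) / (n - m) \<le> (4 * (1 + n powr (a-1)) / n) * (1/m + 1/(n - m))"
proof -
  define Q where "Q = 4 * (1 + n powr (a-1)) / n"
  have n0: "n > 0" using assms by simp
  have Q0: "Q \<ge> 0" using n0 by (simp add: Q_def)
  have mq: "m powr (a-2) = m powr (a-1) / m" using assms
    by (simp add: powr_diff power2_eq_square)
  show ?thesis
  proof (cases "2 * m \<ge> n")
    case True
    have "m powr (a-2) \<le> 4 * n powr (a-2)"
    proof (cases "a \<ge> 2")
      case True
      have "m powr (a-2) \<le> n powr (a-2)" using assms True by (intro powr_mono2) auto
      thus ?thesis using powr_ge_zero[of n "a-2"] by linarith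
    next
      case False
      have "m powr (a-2) \<le> (n/2) powr (a-2)" using assms False \<open>2*m \<ge> n\<close> by (intro powr_mono2') auto
      also have "\<dots> = n powr (a-2) / 2 powr (a-2)" using n0 by (simp add: powr_divide)
      also have "\<dots> \<le> n powr (a-2) / (1/4)"
      proof (intro divide_left_mono)
        have "2 powr (-2) \<le> 2 powr (a-2)" using assms by (intro powr_mono) auto
        moreover have "(2::real) powr (-2) = 1/4" by (simp add: powr_minus powr_numeral)
        ultimately show "1/4 \<le> 2 powr (a-2)" by simp
      qed auto
      finally show ?thesis by simp
    qed
    also have "4 * n powr (a-2) = 4 * n powr (a-1) / n" using n0
      by (simp add: powr_diff power2_eq_square)
    also have "\<dots> \<le> Q" unfolding Q_def using n0 by (intro divide_right_mono) auto
    finally have "m powr (a-2) / (n-m) \<le> Q / (n-m)" using assms by (intro divide_right_mono) auto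
    also have "\<dots> \<le> Q * (1/m + 1/(n-m))"
    proof -
      have "0 \<le> Q/m" "0 \<le> Q/(n-m)" using Q0 assms by auto
      thus ?thesis by (simp add: distrib_left)
    qed
    finally show ?thesis by (simp add: Q_def)
  next
    case False
    have "1/(n-m) \<le> 2/n" using False n0 assms by (simp add: field_simps)
    have "m powr (a-2) / (n-m) = (m powr (a-1) / m) * (1/(n-m))" by (simp add: mq)
    also have "\<dots> \<le> (m powr (a-1) / m) * (2/n)"
      using \<open>1/(n-m) \<le> 2/n\<close> assms by (intro mult_left_mono) auto
    also have "\<dots> \<le> ((1 + n powr (a-1)) / m) * (2/n)" using powr_le_ub[of m n a] assms n0
      by (intro mult_right_mono divide_right_mono) auto
    also have "\<dots> \<le> Q / m" using n0 assms by (simp add: Q_def field_simps)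
    also have "\<dots> \<le> Q * (1/m + 1/(n-m))"
    proof -
      have "0 \<le> Q/m" "0 \<le> Q/(n-m)" using Q0 assms by auto
      thus ?thesis by (simp add: distrib_left)
    qed
    finally show ?thesis by (simp add: Q_def)
  qed
qed

lemma conv_bound:
  fixes a :: real and n :: nat assumes "a > 0" "n \<ge> 2"
  shows "(\<Sum>m=1..<n. real m powr (a - 2) / (real n - m)) \<le> 8 * (1 + real n powr (a-1)) * (1 + ln (real n)) / n"
proof -
  define Q where "Q = 4 * (1 + real n powr (a-1)) / n"
  have Q0: "Q \<ge> 0" by (simp add: Q_def)
  have "(\<Sum>m=1..<n. real m powr (a - 2) / (real n - m)) \<le> (\<Sum>m=1..<n. Q * (1/m + 1/(real n - m)))"
    using assms unfolding Q_def by (intro sum_mono conv_term_bound) auto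
  also have "\<dots> = Q * ((\<Sum>m=1..<n. 1/real m) + (\<Sum>m=1..<n. 1/(real n - m)))"
    by (simp add: distrib_left sum.distrib sum_distrib_left)
  also have "(\<Sum>m=1..<n. 1/(real n - m)) = (\<Sum>m=1..<n. 1/real m)"
    by (subst sum.atLeastLessThan_rev) (intro sum.cong refl, auto simp: of_nat_diff)
  also have "(\<Sum>m=1..<n. 1/real m) = harm (n - 1)"
    using assms by (simp add: harm_def atLeastLessThanSuc_atLeastAtMost[symmetric] divide_inverse)
  finally have s1: "(\<Sum>m=1..<n. real m powr (a - 2) / (real n - m)) \<le> Q * (2 * harm (n-1))" by simp
  have "harm (n-1) \<le> (harm n :: real)" by (intro harm_mono) auto
  also have "harm n \<le> 1 + ln (real n)" using harm_le_ln assms by simp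
  finally have "Q * (2 * harm (n-1)) \<le> Q * (2 * (1 + ln (real n)))" using Q0 by (intro mult_left_mono) auto
  with s1 have "(\<Sum>m=1..<n. real m powr (a - 2) / (real n - m)) \<le> Q * (2 * (1 + ln (real n)))" by linarith
  also have "Q * (2 * (1 + ln (real n))) = 8 * (1 + real n powr (a-1)) * (1 + ln (real n)) / n"
    unfolding Q_def by (simp add: field_simps)
  finally show ?thesis .
qed

lemma bound_bigo:
  fixes f g h :: "nat \<Rightarrow> real"
  assumes "eventually (\<lambda>n. \<bar>f n\<bar> \<le> g n) at_top" "g \<in> O(h)"
  shows "f \<in> O(h)"
proof -
  have "eventually (\<lambda>n. norm (f n) \<le> 1 * norm (g n)) at_top"
    using assms(1) by (auto elim!: eventually_mono)
  hence "f \<in> O(g)" by (rule bigoI)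
  thus ?thesis using assms(2) by (rule landau_o.big_trans)
qed

lemma cmul_bigo: fixes g h :: "nat \<Rightarrow> real" shows "g \<in> O(h) \<Longrightarrow> (\<lambda>x. c * g x) \<in> O(h)"
  by (cases "c = 0") auto

lemma A_part:
  fixes a :: real assumes a: "a > 0"
  shows "(\<lambda>n::nat. (\<Sum>m=2..n-1. real m powr a / (real (n-m) * real (n-m+1))) -
     (real n powr a - a * real n powr (a-1) * ln (real n) + a * Digamma a * real n powr (a-1)))
     \<in> O(\<lambda>n. real n powr (a-1) / ln (real n))"
proof -
  obtain K C1 where K: "K > 0" "C1 \<ge> 0" and KC: "\<And>m. m \<ge> 1 \<Longrightarrow> \<bar>K * cc a m - real m powr (a-1)\<bar> \<le> C1 * real m powr (a-2)"
    using cc_asym[OF a] by blast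
  define Ca where "Ca = a + a^2 * exp a"
  define C2 where "C2 = Ca + a * C1"
  have Ca0: "Ca \<ge> 0" using a by (simp add: Ca_def)
  have C20: "C2 \<ge> 0" using a K Ca0 by (simp add: C2_def)
  define f where "f m = real m powr a" for m :: nat
  define h where "h n = (\<Sum>j<n. 1/(a + real j))" for n :: nat
  define Psi where "Psi = Digamma a"
  have hr: "\<bar>h n - ln (real n) + Psi\<bar> \<le> 2*(a+1)/n" if "n \<ge> 1" for n
    using digamma_rate[OF a] that by (simp add: h_def Psi_def)
  define E1 where "E1 n = (\<Sum>m=2..<n-1. (f (Suc m) - f m - a * K * cc a m) / (real n - m))" for n
  define X1 where "X1 n = f (n-1) + a * K * cc a (n-1) - real n powr a" for n
  define X2 where "X2 n = - a * (K * cc a n * h n - real n powr (a-1) * (ln (real n) - Psi))" for n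
  define X3 where "X3 n = a * K * (1 / real n) + a * K * (a / (real n - 1)) - f 2 / (real n - 1)" for n
  have Dbound: "\<bar>f (Suc m) - f m - a * K * cc a m\<bar> \<le> C2 * real m powr (a-2)" if m: "m \<ge> 1" for m
  proof -
    have b1: "\<bar>(real m + 1) powr a - real m powr a - a * real m powr (a-1)\<bar> \<le> Ca * real m powr (a-2)"
      using powr_step_bound[of "real m" a] m a by (simp add: Ca_def)
    have "\<bar>a * (K * cc a m - real m powr (a-1))\<bar> \<le> a * (C1 * real m powr (a-2))"
      using KC[OF m] a by (simp add: abs_mult mult_left_mono)
    moreover have "f (Suc m) - f m - a * K * cc a m =
       ((real m + 1) powr a - real m powr a - a * real m powr (a-1)) - a * (K * cc a m - real m powr (a-1))"
      by (simp add: f_def algebra_simps)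
    ultimately show ?thesis using b1 by (simp add: C2_def algebra_simps)
  qed
  have ident: "(\<Sum>m=2..n-1. real m powr a / (real (n-m) * real (n-m+1))) -
     (real n powr a - a * real n powr (a-1) * ln (real n) + a * Digamma a * real n powr (a-1))
     = X1 n + X2 n + X3 n - E1 n" if n: "n \<ge> 4" for n
  proof -
    have s1: "(\<Sum>m=2..n-1. real m powr a / (real (n-m) * real (n-m+1))) = (\<Sum>m=2..n-1. f m * (1/(real n - m) - 1/(real n - m + 1)))"
    proof (intro sum.cong refl)
      fix m assume m: "m \<in> {2..n-1}"
      hence e: "real (n-m) = real n - m" "real (n-m+1) = real n - m + 1" by (auto simp: of_nat_diff)
      have "real n - m \<ge> 1" using m n by auto
      thus "real m powr a / (real (n-m) * real (n-m+1)) = f m * (1/(real n - m) - 1/(real n - m + 1))"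
        unfolding e by (simp add: f_def field_simps)
    qed
    have s2: "(\<Sum>m=2..n-1. f m * (1/(real n - m) - 1/(real n - m + 1))) = f (n-1) - f 2 / (real n - 1) - (\<Sum>m=2..<n-1. (f (Suc m) - f m) / (real n - m))"
      using sbp[of "n-1" n f] n by (simp add: of_nat_diff)
    define S2 where "S2 = (\<Sum>m=2..<n-1. cc a m / (real n - m))"
    have s3: "(\<Sum>m=2..<n-1. (f (Suc m) - f m) / (real n - m)) = a * K * S2 + E1 n"
    proof -
      have "a * K * S2 + E1 n = (\<Sum>m=2..<n-1. a * K * (cc a m / (real n - m)) + (f (Suc m) - f m - a * K * cc a m) / (real n - m))"
        by (simp add: S2_def E1_def sum_distrib_left sum.distrib)
      also have "\<dots> = (\<Sum>m=2..<n-1. (f (Suc m) - f m) / (real n - m))"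
        by (intro sum.cong refl) (simp add: diff_divide_distrib)
      finally show ?thesis by simp
    qed
    have s4: "cc a n * h n = 1 / real n + a / (real n - 1) + S2 + cc a (n-1)"
    proof -
      define g where "g m = cc a m / (real n - real m)" for m
      have "cc a n * h n = (\<Sum>m<n. g m)" using cc_conv[OF a, of n] by (simp add: g_def h_def)
      also have "{..<n} = {..<Suc (n-1)}" using n by simp
      also have "(\<Sum>m<Suc (n-1). g m) = (\<Sum>m<n-1. g m) + g (n-1)" by simp
      also have "(\<Sum>m<n-1. g m) = (\<Sum>m\<in>{0..<2}. g m) + (\<Sum>m=2..<n-1. g m)"
        using sum.atLeastLessThan_concat[of 0 2 "n-1" g] n by (simp add: atLeast0LessThan)
      also have "(\<Sum>m\<in>{0..<2}. g m) = g 0 + g 1" by (simp add: numeral_2_eq_2)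
      also have "g 0 = 1 / real n" by (simp add: g_def)
      also have "g 1 = a / (real n - 1)" by (simp add: g_def cc_Suc[of a 0, simplified])
      also have "g (n-1) = cc a (n-1)" using n by (simp add: g_def of_nat_diff)
      finally show ?thesis by (simp add: S2_def g_def)
    qed
    have "(\<Sum>m=2..n-1. real m powr a / (real (n-m) * real (n-m+1))) =
        f (n-1) - f 2 / (real n - 1) - (a * K * (cc a n * h n - 1 / real n - a / (real n - 1) - cc a (n-1)) + E1 n)"
      using s1 s2 s3 s4 by simp
    thus ?thesis by (simp add: X1_def X2_def X3_def Psi_def algebra_simps)
  qed
  define g1 where "g1 n = (real n - 1) powr (a-2)" for n :: nat
  define g2 where "g2 n = real n powr (a-2) * (ln (real n) + 1)" for n :: nat
  define g3 where "g3 n = real n powr (a-1) / real n" for n :: nat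
  define g4 where "g4 n = 1 / (real n - 1)" for n :: nat
  define g5 where "g5 n = (1 + ln (real n)) / real n" for n :: nat
  define g6 where "g6 n = real n powr (a-1) * (1 + ln (real n)) / real n" for n :: nat
  define M2 where "M2 = a * C1 * (\<bar>Psi\<bar> + 2*a + 3)"
  define M3 where "M3 = a * 2 * (a+1)"
  define M4 where "M4 = a * K + a * K * a + 2 powr a"
  have B1: "\<bar>X1 n\<bar> \<le> C2 * g1 n" if n: "n \<ge> 4" for n
  proof -
    have "\<bar>f (Suc (n-1)) - f (n-1) - a * K * cc a (n-1)\<bar> \<le> C2 * real (n-1) powr (a-2)"
      using Dbound[of "n-1"] n by simp
    moreover have "Suc (n-1) = n" using n by simp
    moreover have "real (n-1) = real n - 1" using n by (simp add: of_nat_diff)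
    ultimately show ?thesis by (simp add: X1_def g1_def f_def algebra_simps abs_minus_commute)
  qed
  have B2: "\<bar>X2 n\<bar> \<le> M2 * g2 n + M3 * g3 n" if n: "n \<ge> 4" for n
  proof -
    define u where "u = K * cc a n - real n powr (a-1)"
    define v where "v = h n - ln (real n) + Psi"
    have ub: "\<bar>u\<bar> \<le> C1 * real n powr (a-2)" using KC[of n] n by (simp add: u_def)
    have vb: "\<bar>v\<bar> \<le> 2*(a+1)/n" using hr[of n] n by (simp add: v_def)
    have ln0: "ln (real n) \<ge> 0" using n by simp
    have "2*(a+1)/n \<le> 2*(a+1)/1" using n a by (intro divide_left_mono) auto
    hence t: "2*(a+1)/real n \<le> 2*a+2" by simp
    have hb: "\<bar>h n\<bar> \<le> ln (real n) + \<bar>Psi\<bar> + 2*a + 2"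
      using vb t ln0 abs_ge_self[of Psi] abs_ge_minus_self[of Psi] abs_ge_self[of v] abs_ge_minus_self[of v]
      unfolding v_def abs_le_iff by linarith
    have "\<bar>u * h n\<bar> \<le> C1 * real n powr (a-2) * (ln (real n) + \<bar>Psi\<bar> + 2*a + 2)"
      unfolding abs_mult by (intro mult_mono ub hb) (use K in auto)
    also have "\<dots> \<le> C1 * real n powr (a-2) * ((\<bar>Psi\<bar> + 2*a + 3) * (ln (real n) + 1))"
    proof (intro mult_left_mono)
      show "ln (real n) + \<bar>Psi\<bar> + 2*a + 2 \<le> (\<bar>Psi\<bar> + 2*a + 3) * (ln (real n) + 1)"
        using ln0 a by (simp add: algebra_simps)
    qed (use K in auto)
    finally have hu: "\<bar>u * h n\<bar> \<le> C1 * (\<bar>Psi\<bar> + 2*a + 3) * g2 n" by (simp add: g2_def mult_ac)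
    have "\<bar>real n powr (a-1) * v\<bar> \<le> real n powr (a-1) * (2*(a+1)/n)"
    proof -
      have "real n powr (a-1) * \<bar>v\<bar> \<le> real n powr (a-1) * (2*(a+1)/n)"
        using vb by (rule mult_left_mono) simp
      thus ?thesis by (simp add: abs_mult)
    qed
    hence hv: "\<bar>real n powr (a-1) * v\<bar> \<le> 2*(a+1) * g3 n" by (simp add: g3_def mult.commute)
    have "X2 n = - a * (u * h n + real n powr (a-1) * v)"
      by (simp add: X2_def u_def v_def algebra_simps)
    hence "\<bar>X2 n\<bar> = a * \<bar>u * h n + real n powr (a-1) * v\<bar>" using a by (simp add: abs_mult)
    also have "\<dots> \<le> a * (C1 * (\<bar>Psi\<bar> + 2*a + 3) * g2 n + 2*(a+1) * g3 n)"
      using hu hv a abs_triangle_ineq by (intro mult_left_mono) (auto intro: order_trans)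
    finally show ?thesis by (simp add: M2_def M3_def algebra_simps)
  qed
  have B3: "\<bar>X3 n\<bar> \<le> M4 * g4 n" if n: "n \<ge> 4" for n
  proof -
    have "1 / real n \<le> 1 / (real n - 1)" using n by (intro divide_left_mono) auto
    hence "a * K * (1 / real n) \<le> a * K * (1 / (real n - 1))" using a K by (intro mult_left_mono) auto
    moreover have "0 \<le> a * K * (1 / real n)" using a K by simp
    moreover have "0 \<le> a * K * (a / (real n - 1))" using a K n by simp
    moreover have "0 \<le> f 2 / (real n - 1)" using n by (simp add: f_def)
    ultimately have "\<bar>X3 n\<bar> \<le> a * K * (1 / (real n - 1)) + a * K * (a / (real n - 1)) + f 2 / (real n - 1)"
      unfolding X3_def by linarith
    also have "\<dots> = M4 * g4 n" by (simp add: M4_def g4_def f_def add_divide_distrib)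
    finally show ?thesis .
  qed
  have B4: "\<bar>E1 n\<bar> \<le> 8 * C2 * g5 n + 8 * C2 * g6 n" if n: "n \<ge> 4" for n
  proof -
    have "\<bar>E1 n\<bar> \<le> (\<Sum>m=2..<n-1. \<bar>(f (Suc m) - f m - a * K * cc a m) / (real n - m)\<bar>)"
      unfolding E1_def by (rule sum_abs)
    also have "\<dots> \<le> (\<Sum>m=2..<n-1. C2 * (real m powr (a-2) / (real n - m)))"
    proof (intro sum_mono)
      fix m assume m: "m \<in> {2..<n-1}"
      hence pos: "real n - m > 0" by auto
      have "\<bar>(f (Suc m) - f m - a * K * cc a m) / (real n - m)\<bar> = \<bar>f (Suc m) - f m - a * K * cc a m\<bar> / (real n - m)"
        using pos by simp
      also have "\<dots> \<le> C2 * real m powr (a-2) / (real n - m)"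
        using Dbound[of m] m pos by (intro divide_right_mono) auto
      finally show "\<bar>(f (Suc m) - f m - a * K * cc a m) / (real n - m)\<bar> \<le> C2 * (real m powr (a-2) / (real n - m))" by simp
    qed
    also have "\<dots> = C2 * (\<Sum>m=2..<n-1. real m powr (a-2) / (real n - m))" by (simp add: sum_distrib_left)
    also have "(\<Sum>m=2..<n-1. real m powr (a-2) / (real n - m)) \<le> (\<Sum>m=1..<n. real m powr (a-2) / (real n - m))"
      by (intro sum_mono2) auto
    hence "C2 * (\<Sum>m=2..<n-1. real m powr (a-2) / (real n - m)) \<le> C2 * (\<Sum>m=1..<n. real m powr (a-2) / (real n - m))"
      using C20 by (intro mult_left_mono) auto
    also have "\<dots> \<le> C2 * (8 * (1 + real n powr (a-1)) * (1 + ln (real n)) / n)"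
      using conv_bound[OF a, of n] n C20 by (intro mult_left_mono) auto
    also have "\<dots> = 8 * C2 * g5 n + 8 * C2 * g6 n" using n by (simp add: g5_def g6_def field_simps)
    finally show ?thesis .
  qed
  define G where "G n = C2 * g1 n + (M2 * g2 n + M3 * g3 n) + M4 * g4 n + (8 * C2 * g5 n + 8 * C2 * g6 n)" for n
  have ev: "eventually (\<lambda>n. \<bar>(\<Sum>m=2..n-1. real m powr a / (real (n-m) * real (n-m+1))) -
     (real n powr a - a * real n powr (a-1) * ln (real n) + a * Digamma a * real n powr (a-1))\<bar> \<le> G n) at_top"
    using eventually_ge_at_top[of "4::nat"]
  proof eventually_elim
    case (elim n)
    have "\<bar>X1 n + X2 n + X3 n - E1 n\<bar> \<le> \<bar>X1 n\<bar> + \<bar>X2 n\<bar> + \<bar>X3 n\<bar> + \<bar>E1 n\<bar>" by linarith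
    also have "\<dots> \<le> G n" unfolding G_def using B1[OF elim] B2[OF elim] B3[OF elim] B4[OF elim] by linarith
    finally show ?case using ident[OF elim] by simp
  qed
  have o1: "g1 \<in> O(\<lambda>n. real n powr (a-1) / ln (real n))" unfolding g1_def using a by real_asymp
  have o2: "g2 \<in> O(\<lambda>n. real n powr (a-1) / ln (real n))" unfolding g2_def using a by real_asymp
  have o3: "g3 \<in> O(\<lambda>n. real n powr (a-1) / ln (real n))" unfolding g3_def using a by real_asymp
  have o4: "g4 \<in> O(\<lambda>n. real n powr (a-1) / ln (real n))" unfolding g4_def using a by real_asymp
  have o5: "g5 \<in> O(\<lambda>n. real n powr (a-1) / ln (real n))" unfolding g5_def using a by real_asymp
  have o6: "g6 \<in> O(\<lambda>n. real n powr (a-1) / ln (real n))" unfolding g6_def using a by real_asymp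
  have "G \<in> O(\<lambda>n. real n powr (a-1) / ln (real n))" unfolding G_def
    by (intro sum_in_bigo cmul_bigo o1 o2 o3 o4 o5 o6)
  with ev show ?thesis by (rule bound_bigo)
qed

lemma T1:
  fixes a m n :: real assumes a: "a > 0" and m: "2 \<le> m" "m + 1 \<le> n"
  shows "\<bar>m powr a / ((n-m)*(n-m+1)) * ln (n/m) - n powr (a-1) / (n-m+1)\<bar> \<le> (4 + 2*a + 8/a) * n powr (a-2)"
proof -
  define k where "k = n - m"
  have k1: "k \<ge> 1" using m by (simp add: k_def)
  have n0: "n > 0" "m > 0" using m by auto
  have na2: "n powr (a-2) = n powr a / n^2" using n0 by (simp add: powr_diff)
  have na1: "n powr (a-1) = n powr a / n" using n0 by (simp add: powr_diff)
  have Lnn: "ln (n/m) \<ge> 0" using m n0 by simp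
  show ?thesis
  proof (cases "2 * m \<ge> n")
    case True
    define x where "x = k / n"
    have x0: "0 < x" "x \<le> 1/2" using k1 True n0 by (auto simp: x_def k_def field_simps)
    have mx: "m = n * (1 - x)" using n0 by (simp add: x_def k_def field_simps)
    define L where "L = - ln (1 - x)"
    have L: "ln (n/m) = L" using n0 x0 by (simp add: mx L_def ln_div ln_mult)
    have Lb: "0 \<le> L - x" "L - x \<le> 2*x^2" using ln1m_bound[of x] x0 by (auto simp: L_def)
    define q where "q = (1 - x) powr a"
    have qb: "0 \<le> 1 - q" "1 - q \<le> 2*a*x" using one_minus_powr_bound[of x a] x0 a by (auto simp: q_def)
    have q0: "0 \<le> q" by (simp add: q_def)
    have mpa: "m powr a = n powr a * q" using n0 x0 by (simp add: mx q_def powr_mult)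
    have "\<bar>q * L - x\<bar> \<le> 2*x^2 + 2*a*x^2"
    proof -
      have "q * L - x = q * (L - x) - x * (1 - q)" by (simp add: algebra_simps)
      moreover have "q * (L - x) \<le> 1 * (2*x^2)" using Lb qb q0 by (intro mult_mono) auto
      moreover have "0 \<le> q * (L - x)" using Lb q0 by simp
      moreover have "x * (1 - q) \<le> 2*a*x^2"
      proof -
        have "x * (1 - q) \<le> x * (2*a*x)" using qb x0 by (intro mult_left_mono) auto
        thus ?thesis by (simp add: power2_eq_square mult_ac)
      qed
      moreover have "0 \<le> x * (1 - q)" using qb x0 by simp
      moreover have "0 \<le> 2*a*x^2" using a by simp
      ultimately show ?thesis unfolding abs_le_iff by simp
    qed
    have eq: "m powr a / ((n-m)*(n-m+1)) * ln (n/m) - n powr (a-1) / (n-m+1) = n powr a * (q * L - x) / (k*(k+1))"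
    proof -
      have e1: "n - m = k" "n - m + 1 = k + 1" by (simp_all add: k_def)
      have k0: "k \<noteq> 0" "k + 1 \<noteq> 0" "n \<noteq> 0" using k1 n0 by auto
      have kk: "k / (k*(k+1)) = 1/(k+1)" using k0 by simp
      have "n powr a * (k / n) / (k * (k+1)) = (n powr a / n) * (k / (k*(k+1)))" by (simp add: divide_inverse mult_ac)
      hence "n powr a * (k / n) / (k * (k+1)) = n powr a / n / (k+1)" unfolding kk by simp
      moreover have "n powr a * (q * L - x) / (k*(k+1)) = n powr a * q / (k*(k+1)) * L - n powr a * (k / n) / (k * (k+1))"
        by (simp add: x_def right_diff_distrib diff_divide_distrib mult_ac)
      ultimately show ?thesis unfolding mpa L na1 e1 by simp
    qed
    have "\<bar>n powr a * (q * L - x) / (k*(k+1))\<bar> = n powr a * \<bar>q * L - x\<bar> / (k*(k+1))"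
      using k1 by (simp add: abs_mult)
    also have "\<dots> \<le> n powr a * (2*x^2 + 2*a*x^2) / (k*(k+1))"
      using k1 \<open>\<bar>q * L - x\<bar> \<le> _\<close> by (intro divide_right_mono mult_left_mono) auto
    also have "\<dots> = (2 + 2*a) * n powr (a-2) * (k / (k+1))"
    proof -
      have k0: "k \<noteq> 0" "k + 1 \<noteq> 0" using k1 by auto
      have "2*x^2 + 2*a*x^2 = (2+2*a) * ((k*k)/(n*n))" by (simp add: x_def power2_eq_square algebra_simps)
      hence "n powr a * (2*x^2 + 2*a*x^2) / (k*(k+1)) = (2+2*a) * (n powr a / (n*n)) * ((k*k)/(k*(k+1)))"
        by (simp add: divide_inverse mult_ac)
      also have "(k*k)/(k*(k+1)) = k/(k+1)" using k0 by simp
      finally show ?thesis unfolding na2 by (simp add: power2_eq_square)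
    qed
    also have "\<dots> \<le> (2 + 2*a) * n powr (a-2) * 1"
      using k1 a by (intro mult_left_mono) auto
    also have "\<dots> \<le> (4 + 2*a + 8/a) * n powr (a-2)"
    proof -
      have "2 + 2*a \<le> 4 + 2*a + 8/a" using a by simp
      thus ?thesis by (simp add: mult_right_mono)
    qed
    finally show ?thesis using eq by simp
  next
    case False
    have kb: "k \<ge> n/2" using False by (simp add: k_def)
    have w: "1 / ((n-m)*(n-m+1)) \<le> 4 / n^2"
    proof -
      have "(n/2)*(n/2) \<le> k*k" using kb n0 by (intro mult_mono) auto
      hence "n^2/4 \<le> k*k" by (simp add: power2_eq_square)
      also have "\<dots> \<le> k*(k+1)" using k1 by simp
      finally have "n^2/4 \<le> k*(k+1)" .
      hence "1/(k*(k+1)) \<le> 1/(n^2/4)" using n0 k1 by (intro divide_left_mono) auto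
      thus ?thesis by (simp add: k_def)
    qed
    have lnb: "ln (n/m) \<le> (n/m) powr (a/2) / (a/2)" using ln_le_powr_eps[of "n/m" "a/2"] n0 a by simp
    have "m powr a * (n/m) powr (a/2) = m powr (a/2) * n powr (a/2)"
      using n0 by (simp add: powr_divide field_simps powr_add[symmetric])
    also have "\<dots> \<le> n powr (a/2) * n powr (a/2)" using m a n0 by (intro mult_right_mono powr_mono2) auto
    also have "\<dots> = n powr a" by (simp add: powr_add[symmetric])
    finally have mn: "m powr a * (n/m) powr (a/2) \<le> n powr a" .
    have "m powr a * ln (n/m) \<le> m powr a * ((n/m) powr (a/2) / (a/2))" using lnb by (intro mult_left_mono) auto
    also have "\<dots> = (2/a) * (m powr a * (n/m) powr (a/2))" by simp
    also have "\<dots> \<le> (2/a) * n powr a" using mn a by (intro mult_left_mono) auto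
    finally have t1: "m powr a * ln (n/m) \<le> (2/a) * n powr a" .
    have A0: "0 \<le> m powr a / ((n-m)*(n-m+1)) * ln (n/m)" using m Lnn by simp
    have "m powr a / ((n-m)*(n-m+1)) * ln (n/m) = (m powr a * ln (n/m)) * (1 / ((n-m)*(n-m+1)))" by simp
    also have "\<dots> \<le> ((2/a) * n powr a) * (4 / n^2)"
      by (rule mult_mono[OF t1 w]) (use a m in auto)
    also have "\<dots> = (8/a) * n powr (a-2)" unfolding na2 by simp
    finally have A1: "m powr a / ((n-m)*(n-m+1)) * ln (n/m) \<le> (8/a) * n powr (a-2)" .
    have "n powr (a-1) / (n-m+1) \<le> n powr (a-1) / (n/2)" using kb n0 k1
      by (intro divide_left_mono) (auto simp: k_def)
    also have "\<dots> = 2 * n powr (a-2)" using n0 unfolding na1 na2 by (simp add: field_simps power2_eq_square)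
    finally have A2: "n powr (a-1) / (n-m+1) \<le> 2 * n powr (a-2)" .
    have A3: "0 \<le> n powr (a-1) / (n-m+1)" using m by simp
    have "(8/a) * n powr (a-2) + 2 * n powr (a-2) \<le> (4 + 2*a + 8/a) * n powr (a-2)"
      using a by (simp add: algebra_simps)
    thus ?thesis using A0 A1 A2 A3 by (simp add: abs_le_iff)
  qed
qed

lemma T2:
  fixes a m n :: real assumes a: "a > 0" and m: "2 \<le> m" "m + 1 \<le> n"
  shows "0 \<le> m powr a / ((n-m)*(n-m+1)) * ln (n/m)^2"
    "m powr a / ((n-m)*(n-m+1)) * ln (n/m)^2 \<le> (4 + 64/a^2) * n powr (a-2)"
proof -
  define k where "k = n - m"
  have k1: "k \<ge> 1" using m by (simp add: k_def)
  have n0: "n > 0" "m > 0" using m by auto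
  have na2: "n powr (a-2) = n powr a / n^2" using n0 by (simp add: powr_diff)
  show "0 \<le> m powr a / ((n-m)*(n-m+1)) * ln (n/m)^2" using m by simp
  show "m powr a / ((n-m)*(n-m+1)) * ln (n/m)^2 \<le> (4 + 64/a^2) * n powr (a-2)"
  proof (cases "2 * m \<ge> n")
    case True
    define x where "x = k / n"
    have x0: "0 < x" "x \<le> 1/2" using k1 True n0 by (auto simp: x_def k_def field_simps)
    have mx: "m = n * (1 - x)" using n0 by (simp add: x_def k_def field_simps)
    have L: "ln (n/m) = - ln (1 - x)" using n0 x0 by (simp add: mx ln_div ln_mult)
    have Lb: "0 \<le> - ln (1 - x) - x" "- ln (1 - x) - x \<le> 2*x^2" using ln1m_bound[of x] x0 by auto
    have "2*x^2 \<le> x" proof -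
      have "x * (2*x) \<le> x * 1" using x0 by (intro mult_left_mono) auto
      thus ?thesis by (simp add: power2_eq_square)
    qed
    hence L2: "0 \<le> ln (n/m)" "ln (n/m) \<le> 2*x" using Lb x0 unfolding L by linarith+
    have "ln (n/m)^2 \<le> (2*x)^2" using L2 by (intro power_mono) auto
    moreover have "m powr a \<le> n powr a" using m a by (intro powr_mono2) auto
    ultimately have "m powr a * ln (n/m)^2 \<le> n powr a * (2*x)^2" by (intro mult_mono) auto
    hence "m powr a / ((n-m)*(n-m+1)) * ln (n/m)^2 \<le> n powr a * (2*x)^2 / (k*(k+1))"
      using k1 by (simp add: k_def divide_right_mono)
    also have "n powr a * (2*x)^2 / (k*(k+1)) = 4 * (n powr a / (n*n)) * ((k*k)/(k*(k+1)))"
      by (simp add: x_def power2_eq_square divide_inverse mult_ac)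
    also have "(k*k)/(k*(k+1)) = k/(k+1)" using k1 by simp
    also have "4 * (n powr a / (n*n)) * (k/(k+1)) \<le> 4 * (n powr a / (n*n)) * 1"
      using k1 by (intro mult_left_mono) auto
    also have "\<dots> = 4 * n powr (a-2)" unfolding na2 by (simp add: power2_eq_square)
    also have "\<dots> \<le> (4 + 64/a^2) * n powr (a-2)" by (intro mult_right_mono) auto
    finally show ?thesis .
  next
    case False
    have kb: "k \<ge> n/2" using False by (simp add: k_def)
    have w: "1 / ((n-m)*(n-m+1)) \<le> 4 / n^2"
    proof -
      have "(n/2)*(n/2) \<le> k*k" using kb n0 by (intro mult_mono) auto
      hence "n^2/4 \<le> k*k" by (simp add: power2_eq_square)
      also have "\<dots> \<le> k*(k+1)" using k1 by simp
      finally have "n^2/4 \<le> k*(k+1)" .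
      hence "1/(k*(k+1)) \<le> 1/(n^2/4)" using n0 k1 by (intro divide_left_mono) auto
      thus ?thesis by (simp add: k_def)
    qed
    have L0: "0 \<le> ln (n/m)" using m n0 by simp
    have lnb: "ln (n/m) \<le> (n/m) powr (a/4) / (a/4)" using ln_le_powr_eps[of "n/m" "a/4"] n0 a by simp
    hence "ln (n/m)^2 \<le> ((n/m) powr (a/4) / (a/4))^2" using L0 by (intro power_mono) auto
    also have "\<dots> = (16/a^2) * (n/m) powr (a/2)"
      using n0 by (simp add: power_divide power2_eq_square powr_add[symmetric] field_simps)
    finally have l2: "ln (n/m)^2 \<le> (16/a^2) * (n/m) powr (a/2)" .
    have "m powr a * (n/m) powr (a/2) = m powr (a/2) * n powr (a/2)"
      using n0 by (simp add: powr_divide field_simps powr_add[symmetric])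
    also have "\<dots> \<le> n powr (a/2) * n powr (a/2)" using m a n0 by (intro mult_right_mono powr_mono2) auto
    also have "\<dots> = n powr a" by (simp add: powr_add[symmetric])
    finally have mn: "m powr a * (n/m) powr (a/2) \<le> n powr a" .
    have "m powr a * ln (n/m)^2 \<le> m powr a * ((16/a^2) * (n/m) powr (a/2))" using l2 by (intro mult_left_mono) auto
    also have "\<dots> = (16/a^2) * (m powr a * (n/m) powr (a/2))" by simp
    also have "\<dots> \<le> (16/a^2) * n powr a" using mn a by (intro mult_left_mono) auto
    finally have t1: "m powr a * ln (n/m)^2 \<le> (16/a^2) * n powr a" .
    have "m powr a / ((n-m)*(n-m+1)) * ln (n/m)^2 = (m powr a * ln (n/m)^2) * (1 / ((n-m)*(n-m+1)))" by simp
    also have "\<dots> \<le> ((16/a^2) * n powr a) * (4 / n^2)"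
      by (rule mult_mono[OF t1 w]) (use a m in auto)
    also have "\<dots> = (64/a^2) * n powr (a-2)" unfolding na2 by simp
    also have "\<dots> \<le> (4 + 64/a^2) * n powr (a-2)" by (intro mult_right_mono) auto
    finally show ?thesis .
  qed
qed

lemma big_term:
  fixes p m n W :: real assumes p: "p \<ge> 0" and m: "2 \<le> m" "m \<le> n" "n \<le> m*m" and W: "W \<ge> 0"
  shows "\<bar>W * (1 / ln m powr p - 1 / ln n powr p) - p / (ln n powr p * ln n) * (W * ln (n/m))\<bar>
     \<le> (2*p + 4*p^2*exp p) * (W * ln (n/m)^2) / (ln n powr p * ln n ^ 2)"
proof -
  define l where "l = ln n"
  define lm where "lm = ln m"
  have lm0: "lm > 0" using m by (simp add: lm_def)
  have llm: "lm \<le> l" using m by (simp add: lm_def l_def)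
  have l0: "l > 0" using lm0 llm by simp
  have "ln n \<le> ln (m*m)" using m by simp
  hence l2: "l \<le> 2 * lm" using m by (simp add: l_def lm_def ln_mult)
  define s where "s = (l - lm) / l"
  have s0: "0 \<le> s" "s \<le> 1/2" using llm l2 l0 by (auto simp: s_def field_simps)
  have lms: "lm = l * (1 - s)" using l0 by (simp add: s_def field_simps)
  have lnnm: "ln (n/m) = l * s" using m l0 by (simp add: ln_div s_def l_def lm_def)
  have e1: "1 / ln m powr p = l powr (-p) * (1 - s) powr (-p)"
  proof -
    have "1 / ln m powr p = lm powr (-p)" by (simp add: lm_def powr_minus divide_inverse)
    also have "\<dots> = l powr (-p) * (1 - s) powr (-p)" unfolding lms using l0 s0 by (simp add: powr_mult)
    finally show ?thesis .
  qed
  have e2: "1 / ln n powr p = l powr (-p)" by (simp add: l_def powr_minus divide_inverse)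
  define R where "R = (1 - s) powr (- p) - 1 - p * s"
  have Rb: "\<bar>R\<bar> \<le> (2*p + 4*p^2*exp p) * s^2" unfolding R_def using powr_neg_quad_bound[OF s0 p] by simp
  have "W * (1 / ln m powr p - 1 / ln n powr p) - p / (ln n powr p * ln n) * (W * ln (n/m)) = W * l powr (-p) * R"
    unfolding e1 e2 lnnm using l0 by (simp add: R_def l_def[symmetric] powr_minus divide_inverse algebra_simps)
  hence "\<bar>W * (1 / ln m powr p - 1 / ln n powr p) - p / (ln n powr p * ln n) * (W * ln (n/m))\<bar> = W * l powr (-p) * \<bar>R\<bar>"
    using W by (simp add: abs_mult)
  also have "\<dots> \<le> W * l powr (-p) * ((2*p + 4*p^2*exp p) * s^2)" using Rb W by (intro mult_left_mono) auto
  also have "\<dots> = (2*p + 4*p^2*exp p) * (W * ln (n/m)^2) / (ln n powr p * ln n ^ 2)"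
  proof -
    have c: "(l^2 * s^2) / (l^2 * l powr p) = s^2 / l powr p"
      by (rule nonzero_mult_divide_mult_cancel_left) (use l0 in simp)
    have "(2*p + 4*p^2*exp p) * (W * ln (n/m)^2) / (ln n powr p * ln n ^ 2)
        = (2*p + 4*p^2*exp p) * W * ((l^2 * s^2) / (l^2 * l powr p))"
      unfolding lnnm l_def[symmetric] by (simp add: power_mult_distrib mult_ac)
    also have "\<dots> = W * l powr (-p) * ((2*p + 4*p^2*exp p) * s^2)"
      unfolding c by (simp add: powr_minus divide_inverse mult_ac)
    finally show ?thesis by simp
  qed
  finally show ?thesis .
qed

lemma small_term:
  fixes p m n W :: real assumes p: "p \<ge> 0" and m: "2 \<le> m" "m \<le> n" "3 \<le> n" and W: "W \<ge> 0"
  shows "\<bar>W * (1 / ln m powr p - 1 / ln n powr p) - p / (ln n powr p * ln n) * (W * ln (n/m))\<bar>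
     \<le> W * (1 / ln 2 powr p + p)"
proof -
  have l1: "ln n \<ge> 1" using ln3_gt_1 m by (smt (verit) ln_le_cancel_iff)
  have ln2: "ln 2 > (0::real)" by simp
  have Pm: "ln 2 powr p \<le> ln m powr p" using m p by (intro powr_mono2) auto
  have Pmn: "ln m powr p \<le> ln n powr p" using m p by (intro powr_mono2) auto
  have P2: "ln 2 powr p > 0" by simp
  have Pm0: "ln m powr p > 0" using P2 Pm by linarith
  have Pn0: "ln n powr p > 0" using Pm0 Pmn by linarith
  have "1 / ln n powr p \<le> 1 / ln m powr p" using Pmn Pm0 Pn0 by (intro divide_left_mono) (auto intro: mult_pos_pos)
  hence d0: "0 \<le> 1 / ln m powr p - 1 / ln n powr p" by simp
  have d1: "1 / ln m powr p - 1 / ln n powr p \<le> 1 / ln 2 powr p"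
  proof -
    have "1 / ln m powr p \<le> 1 / ln 2 powr p" using Pm P2 Pm0 by (intro divide_left_mono) (auto intro: mult_pos_pos)
    moreover have "0 \<le> 1 / ln n powr p" by simp
    ultimately show ?thesis by linarith
  qed
  have Pn1: "1 \<le> ln n powr p" using l1 p by (metis powr_one_eq_one powr_mono2 zero_le_one)
  have lnm: "0 \<le> ln (n/m)" "ln (n/m) \<le> ln n" using m by (auto simp: ln_div)
  have q1: "0 \<le> p / (ln n powr p * ln n) * ln (n/m)" using lnm p l1 by simp
  have q2: "p / (ln n powr p * ln n) * ln (n/m) \<le> p"
  proof -
    have "p / (ln n powr p * ln n) * ln (n/m) \<le> p / (ln n powr p * ln n) * ln n"
      using lnm p l1 by (intro mult_left_mono) auto
    also have "\<dots> = p / ln n powr p" using l1 by simp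
    also have "\<dots> \<le> p / 1" using Pn1 p by (intro divide_left_mono) auto
    finally show ?thesis by simp
  qed
  have A1: "0 \<le> W * (1 / ln m powr p - 1 / ln n powr p)" "W * (1 / ln m powr p - 1 / ln n powr p) \<le> W * (1 / ln 2 powr p)"
    using d0 W mult_left_mono[OF d1 W] by auto
  have A2: "0 \<le> W * (p / (ln n powr p * ln n) * ln (n/m))" "W * (p / (ln n powr p * ln n) * ln (n/m)) \<le> W * p"
    using mult_nonneg_nonneg[OF W q1] mult_left_mono[OF q2 W] by auto
  have e: "p / (ln n powr p * ln n) * (W * ln (n/m)) = W * (p / (ln n powr p * ln n) * ln (n/m))" by simp
  define X where "X = W * (1 / ln m powr p - 1 / ln n powr p)"
  define Y where "Y = W * (p / (ln n powr p * ln n) * ln (n/m))"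
  have "\<bar>X - Y\<bar> \<le> W * (1 / ln 2 powr p) + W * p" using A1 A2 unfolding X_def[symmetric] Y_def[symmetric] abs_le_iff by linarith
  thus ?thesis unfolding e X_def Y_def by (simp add: distrib_left)
qed

lemma small_W:
  fixes a m n :: real assumes a: "a > 0" and m: "2 \<le> m" "m * m < n" "4 \<le> n"
  shows "m powr a / ((n-m)*(n-m+1)) \<le> 4 * n powr (a/2 - 2)"
proof -
  have n0: "n > 0" "m > 0" using m by auto
  have mh: "m \<le> n/2"
  proof -
    have "2 * m \<le> m * m" using m by (intro mult_right_mono) auto
    thus ?thesis using m by linarith
  qed
  have "m powr a = (m*m) powr (a/2)" using n0 by (simp add: powr_mult powr_add[symmetric])
  also have "\<dots> \<le> n powr (a/2)" using m a by (intro powr_mono2) auto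
  finally have ma: "m powr a \<le> n powr (a/2)" .
  have "(n/2)*(n/2) \<le> (n-m)*(n-m+1)" using mh n0 by (intro mult_mono) auto
  hence den: "n^2/4 \<le> (n-m)*(n-m+1)" by (simp add: power2_eq_square)
  have "m powr a / ((n-m)*(n-m+1)) \<le> n powr (a/2) / (n^2/4)"
    using ma den n0 by (intro frac_le) auto
  also have "\<dots> = 4 * n powr (a/2 - 2)" using n0 by (simp add: powr_diff)
  finally show ?thesis .
qed

lemma harm_sum:
  assumes n: "n \<ge> (3::nat)"
  shows "(\<Sum>m=2..n-1. 1 / (real n - real m + 1)) = harm (n-1) - 1"
proof -
  have "(\<Sum>m=2..n-1. 1 / (real n - real m + 1)) = (\<Sum>i=2..n-1. 1 / (real n - real (n - 1 + 2 - i) + 1))"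
    by (rule sum.atLeastAtMost_rev)
  also have "\<dots> = (\<Sum>i=2..n-1. 1 / real i)"
  proof (intro sum.cong refl)
    fix i assume i: "i \<in> {2..n-1}"
    hence "real (n - 1 + 2 - i) = real n + 1 - real i" using n by (auto simp: of_nat_diff)
    thus "1 / (real n - real (n - 1 + 2 - i) + 1) = 1 / real i" by simp
  qed
  finally have h1: "(\<Sum>m=2..n-1. 1 / (real n - real m + 1)) = (\<Sum>i=2..n-1. 1 / real i)" .
  have "harm (n-1) = (\<Sum>k=1..n-1. inverse (real k))" by (simp add: harm_def)
  also have "\<dots> = inverse (real 1) + (\<Sum>k=2..n-1. inverse (real k))"
    using sum.atLeast_Suc_atMost[of 1 "n-1" "\<lambda>k. inverse (real k)"] n unfolding Suc_1 by simp
  finally have "harm (n-1) = 1 + (\<Sum>k=2..n-1. 1 / real k)"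
    by (simp add: divide_inverse)
  with h1 show ?thesis by simp
qed

lemma B_part:
  fixes a p :: real assumes a: "a > 0" and p: "p \<ge> 0"
  shows "(\<lambda>n::nat. (\<Sum>m=2..n-1. real m powr a / (real (n-m) * real (n-m+1)) * (1 / ln (real m) powr p - 1 / ln (real n) powr p))
            - p * real n powr (a-1) / ln (real n) powr p)
         \<in> O(\<lambda>n. real n powr (a-1) / (ln (real n) powr p * ln (real n)))"
proof -
  define C3 where "C3 = 4 + 2*a + 8/a"
  define C4 where "C4 = 4 + 64/a^2"
  define Kp where "Kp = 2*p + 4*p^2*exp p"
  define c0 where "c0 = 1 / ln 2 powr p"
  have C30: "C3 \<ge> 0" "C4 \<ge> 0" "Kp \<ge> 0" "c0 \<ge> 0" using a p by (auto simp: C3_def C4_def Kp_def c0_def)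
  define G1 where "G1 n = real n powr (a-1) / (ln (real n) powr p * ln (real n))" for n :: nat
  define G2 where "G2 n = real n powr (a-1) / (ln (real n) powr p * ln (real n) ^ 2)" for n :: nat
  define G3 where "G3 n = real n powr (a/2 - 1)" for n :: nat
  define G where "G n = p * (C3 + 1) * G1 n + Kp * C4 * G2 n + 4 * (c0 + p) * G3 n" for n
  have key: "\<bar>(\<Sum>m=2..n-1. real m powr a / (real (n-m) * real (n-m+1)) * (1 / ln (real m) powr p - 1 / ln (real n) powr p))
            - p * real n powr (a-1) / ln (real n) powr p\<bar> \<le> G n" if n: "n \<ge> 4" for n
  proof -
    define l where "l = ln (real n)"
    define Pn where "Pn = ln (real n) powr p"
    have l0: "l > 0" using n by (simp add: l_def)
    have Pn0: "Pn > 0" using l0 by (simp add: Pn_def l_def)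
    define cc where "cc = p / (Pn * l)"
    have cc0: "cc \<ge> 0" using p l0 Pn0 by (simp add: cc_def)
    define Wf where "Wf m = real m powr a / ((real n - real m) * (real n - real m + 1))" for m :: nat
    define rho where "rho m = Wf m * (1 / ln (real m) powr p - 1 / Pn) - cc * (Wf m * ln (real n / real m))" for m :: nat
    have Wf0: "Wf m \<ge> 0" if "m \<in> {2..n-1}" for m
    proof -
      have "real m + 1 \<le> real n" using that n by (auto simp: of_nat_add[symmetric] simp del: of_nat_add)
      thus ?thesis unfolding Wf_def by (intro divide_nonneg_pos mult_pos_pos) auto
    qed
    have s0: "(\<Sum>m=2..n-1. real m powr a / (real (n-m) * real (n-m+1)) * (1 / ln (real m) powr p - 1 / ln (real n) powr p))
        = cc * (\<Sum>m=2..n-1. Wf m * ln (real n / real m)) + (\<Sum>m=2..n-1. rho m)"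
    proof -
      have "(\<Sum>m=2..n-1. real m powr a / (real (n-m) * real (n-m+1)) * (1 / ln (real m) powr p - 1 / ln (real n) powr p))
          = (\<Sum>m=2..n-1. cc * (Wf m * ln (real n / real m)) + rho m)"
      proof (intro sum.cong refl)
        fix m assume m: "m \<in> {2..n-1}"
        hence "real (n-m) = real n - real m" "real (n-m+1) = real n - real m + 1" by (auto simp: of_nat_diff)
        thus "real m powr a / (real (n-m) * real (n-m+1)) * (1 / ln (real m) powr p - 1 / ln (real n) powr p)
          = cc * (Wf m * ln (real n / real m)) + rho m" by (simp add: rho_def Wf_def Pn_def)
      qed
      thus ?thesis by (simp add: sum.distrib sum_distrib_left)
    qed
    define E3 where "E3 = (\<Sum>m=2..n-1. Wf m * ln (real n / real m) - real n powr (a-1) / (real n - real m + 1))"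
    have s1: "(\<Sum>m=2..n-1. Wf m * ln (real n / real m)) = E3 + real n powr (a-1) * (harm (n-1) - 1)"
    proof -
      have "(\<Sum>m=2..n-1. real n powr (a-1) / (real n - real m + 1)) = real n powr (a-1) * (harm (n-1) - 1)"
      proof -
        have "real n powr (a-1) * (\<Sum>m=2..n-1. 1 / (real n - real m + 1)) = (\<Sum>m=2..n-1. real n powr (a-1) * (1 / (real n - real m + 1)))"
          by (rule sum_distrib_left)
        thus ?thesis using harm_sum[of n] n by simp
      qed
      thus ?thesis by (simp add: E3_def sum_subtractf)
    qed
    have cardb: "real (card {2..n-1}) \<le> real n" by simp
    have E3b: "\<bar>E3\<bar> \<le> real n * (C3 * real n powr (a-2))"
    proof -
      have "\<bar>E3\<bar> \<le> (\<Sum>m=2..n-1. \<bar>Wf m * ln (real n / real m) - real n powr (a-1) / (real n - real m + 1)\<bar>)"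
        unfolding E3_def by (rule sum_abs)
      also have "\<dots> \<le> real (card {2..n-1}) * (C3 * real n powr (a-2))"
      proof (rule sum_bounded_above)
        fix m assume m: "m \<in> {2..n-1}"
        have "m + 1 \<le> n" using m n by auto
        hence mm: "real m + 1 \<le> real n" "2 \<le> real m" using m by (simp_all add: of_nat_add[symmetric] del: of_nat_add)
        show "\<bar>Wf m * ln (real n / real m) - real n powr (a-1) / (real n - real m + 1)\<bar> \<le> C3 * real n powr (a-2)"
          using T1[OF a mm(2) mm(1)] by (simp add: Wf_def C3_def)
      qed
      also have "\<dots> \<le> real n * (C3 * real n powr (a-2))" using cardb C30 by (intro mult_right_mono) auto
      finally show ?thesis .
    qed
    have hb: "\<bar>harm (n-1) - 1 - l\<bar> \<le> (1::real)"
    proof -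
      have "ln (real (n-1) + 1) \<le> (harm (n-1) :: real)" by (rule harm_ge_ln)
      moreover have "real (n-1) + 1 = real n" using n by (simp add: of_nat_diff)
      moreover have "harm (n-1) \<le> (harm n :: real)" by (intro harm_mono) auto
      moreover have "harm n \<le> 1 + ln (real n)" using harm_le_ln n by simp
      ultimately show ?thesis by (simp add: l_def abs_le_iff)
    qed
    have rhob: "\<bar>rho m\<bar> \<le> Kp * (Wf m * ln (real n / real m)^2) / (Pn * l^2) + (c0 + p) * (4 * real n powr (a/2 - 2))"
      if m: "m \<in> {2..n-1}" for m
    proof -
      have W0: "Wf m \<ge> 0" using Wf0[OF m] .
      have mn: "2 \<le> real m" "real m \<le> real n" "3 \<le> real n" "4 \<le> real n" using m n by auto
      have t2: "0 \<le> Kp * (Wf m * ln (real n / real m)^2) / (Pn * l^2)" using C30 W0 Pn0 by simp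
      have t3: "0 \<le> (c0 + p) * (4 * real n powr (a/2 - 2))" using C30 p by simp
      show ?thesis
      proof (cases "real n \<le> real m * real m")
        case True
        have "\<bar>rho m\<bar> \<le> Kp * (Wf m * ln (real n / real m)^2) / (Pn * l^2)"
          using big_term[OF p mn(1) mn(2) True W0]
          by (simp add: rho_def cc_def Pn_def l_def Kp_def)
        thus ?thesis using t3 by linarith
      next
        case False
        have "\<bar>rho m\<bar> \<le> Wf m * (c0 + p)"
          using small_term[OF p mn(1) mn(2) mn(3) W0]
          by (simp add: rho_def cc_def Pn_def l_def c0_def)
        also have "\<dots> \<le> (4 * real n powr (a/2 - 2)) * (c0 + p)"
          using small_W[OF a mn(1) _ mn(4)] False C30 p
          by (intro mult_right_mono) (auto simp: Wf_def)
        finally show ?thesis using t2 by (simp add: mult.commute)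
      qed
    qed
    have rhos: "\<bar>\<Sum>m=2..n-1. rho m\<bar> \<le> Kp * C4 * G2 n + 4 * (c0 + p) * G3 n"
    proof -
      define SW where "SW = (\<Sum>m=2..n-1. Wf m * ln (real n / real m)^2)"
      define B3 where "B3 = (c0 + p) * (4 * real n powr (a/2 - 2))"
      have B30: "B3 \<ge> 0" using C30 p by (simp add: B3_def)
      have r1: "\<bar>\<Sum>m=2..n-1. rho m\<bar> \<le> (\<Sum>m=2..n-1. \<bar>rho m\<bar>)" by (rule sum_abs)
      have r2: "(\<Sum>m=2..n-1. \<bar>rho m\<bar>) \<le> (\<Sum>m=2..n-1. Kp / (Pn * l^2) * (Wf m * ln (real n / real m)^2) + B3)"
        using rhob unfolding B3_def by (intro sum_mono) (simp add: mult_ac)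
      have r3: "(\<Sum>m=2..n-1. Kp / (Pn * l^2) * (Wf m * ln (real n / real m)^2) + B3) = Kp / (Pn * l^2) * SW + real (card {2..n-1}) * B3"
        by (simp add: sum.distrib sum_distrib_left SW_def)
      have r4: "SW \<le> real (card {2..n-1}) * (C4 * real n powr (a-2))"
        unfolding SW_def
      proof (rule sum_bounded_above)
        fix m assume m: "m \<in> {2..n-1}"
        have "m + 1 \<le> n" using m n by auto
        hence mm: "real m + 1 \<le> real n" "2 \<le> real m" using m by (simp_all add: of_nat_add[symmetric] del: of_nat_add)
        show "Wf m * ln (real n / real m)^2 \<le> C4 * real n powr (a-2)"
          using T2(2)[OF a mm(2) mm(1)] by (simp add: Wf_def C4_def)
      qed
      have "real (card {2..n-1}) * (C4 * real n powr (a-2)) \<le> real n * (C4 * real n powr (a-2))"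
        using cardb C30 by (intro mult_right_mono) auto
      with r4 have r4': "SW \<le> real n * (C4 * real n powr (a-2))" by linarith
      have kq: "Kp / (Pn * l^2) \<ge> 0" using C30 Pn0 l0 by simp
      have r5: "Kp / (Pn * l^2) * SW \<le> Kp / (Pn * l^2) * (real n * (C4 * real n powr (a-2)))"
        using mult_left_mono[OF r4' kq] .
      have r6: "real (card {2..n-1}) * B3 \<le> real n * B3" using cardb B30 by (intro mult_right_mono) auto
      have e1: "real n * real n powr (a-2) = real n powr (a-1)" using n
        by (simp add: powr_diff power2_eq_square)
      have r7: "Kp / (Pn * l^2) * (real n * (C4 * real n powr (a-2))) = Kp * C4 * G2 n"
      proof -
        have "Kp / (Pn * l^2) * (real n * (C4 * real n powr (a-2))) = Kp * C4 * ((real n * real n powr (a-2)) / (Pn * l^2))"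
          by (simp add: mult_ac divide_inverse)
        thus ?thesis unfolding e1 by (simp add: G2_def Pn_def l_def)
      qed
      have e2: "real n * real n powr (a/2 - 2) = real n powr (a/2 - 1)" using n
        by (simp add: powr_diff power2_eq_square)
      have r8: "real n * B3 = 4 * (c0 + p) * G3 n"
      proof -
        have "real n * B3 = 4 * (c0 + p) * (real n * real n powr (a/2 - 2))" by (simp add: B3_def mult_ac)
        thus ?thesis unfolding e2 by (simp add: G3_def)
      qed
      show ?thesis using r1 r2 r3 r5 r6 r7 r8 by linarith
    qed
    have D: "(\<Sum>m=2..n-1. real m powr a / (real (n-m) * real (n-m+1)) * (1 / ln (real m) powr p - 1 / ln (real n) powr p))
            - p * real n powr (a-1) / ln (real n) powr p
           = cc * E3 + cc * real n powr (a-1) * (harm (n-1) - 1 - l) + (\<Sum>m=2..n-1. rho m)"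
    proof -
      have "cc * real n powr (a-1) * l = p * real n powr (a-1) / ln (real n) powr p"
        using l0 by (simp add: cc_def Pn_def)
      thus ?thesis unfolding s0 s1 by (simp add: algebra_simps)
    qed
    have "\<bar>cc * E3\<bar> \<le> cc * (real n * (C3 * real n powr (a-2)))" using E3b cc0 by (simp add: abs_mult mult_left_mono)
    also have "\<dots> = p * C3 * G1 n"
    proof -
      have e: "real n * real n powr (a-2) = real n powr (a-1)" using n by (simp add: powr_diff power2_eq_square)
      have "cc * (real n * (C3 * real n powr (a-2))) = p * C3 * ((real n * real n powr (a-2)) / (Pn * l))"
        by (simp add: cc_def divide_inverse mult_ac)
      thus ?thesis unfolding e by (simp add: G1_def Pn_def l_def)
    qed
    finally have d1: "\<bar>cc * E3\<bar> \<le> p * C3 * G1 n" .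
    have "cc * real n powr (a-1) * \<bar>harm (n-1) - 1 - l\<bar> \<le> cc * real n powr (a-1) * 1"
      by (rule mult_left_mono[OF hb]) (use cc0 in simp)
    hence "\<bar>cc * real n powr (a-1) * (harm (n-1) - 1 - l)\<bar> \<le> cc * real n powr (a-1) * 1"
      using cc0 by (simp add: abs_mult)
    also have "\<dots> = p * G1 n" by (simp add: cc_def G1_def Pn_def l_def)
    finally have d2: "\<bar>cc * real n powr (a-1) * (harm (n-1) - 1 - l)\<bar> \<le> p * G1 n" .
    have "p * (C3 + 1) * G1 n = p * C3 * G1 n + p * G1 n" by (simp add: algebra_simps)
    moreover have "\<bar>cc * E3 + cc * real n powr (a-1) * (harm (n-1) - 1 - l) + (\<Sum>m=2..n-1. rho m)\<bar>
        \<le> \<bar>cc * E3\<bar> + \<bar>cc * real n powr (a-1) * (harm (n-1) - 1 - l)\<bar> + \<bar>\<Sum>m=2..n-1. rho m\<bar>"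
      using abs_triangle_ineq[of "cc * E3 + cc * real n powr (a-1) * (harm (n-1) - 1 - l)" "\<Sum>m=2..n-1. rho m"]
            abs_triangle_ineq[of "cc * E3" "cc * real n powr (a-1) * (harm (n-1) - 1 - l)"] by linarith
    ultimately show ?thesis unfolding D G_def using d1 d2 rhos by linarith
  qed
  have o1: "G1 \<in> O(\<lambda>n. real n powr (a-1) / (ln (real n) powr p * ln (real n)))" unfolding G1_def by (rule landau_o.big_refl)
  have o2: "G2 \<in> O(\<lambda>n. real n powr (a-1) / (ln (real n) powr p * ln (real n)))" unfolding G2_def using a p by real_asymp
  have o3: "G3 \<in> O(\<lambda>n. real n powr (a-1) / (ln (real n) powr p * ln (real n)))" unfolding G3_def using a p by real_asymp
  have x1: "(\<lambda>n. p * (C3 + 1) * G1 n) \<in> O(\<lambda>n. real n powr (a-1) / (ln (real n) powr p * ln (real n)))"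
    by (rule cmul_bigo[OF o1])
  have x2: "(\<lambda>n. Kp * C4 * G2 n) \<in> O(\<lambda>n. real n powr (a-1) / (ln (real n) powr p * ln (real n)))"
    by (rule cmul_bigo[OF o2])
  have x3: "(\<lambda>n. 4 * (c0 + p) * G3 n) \<in> O(\<lambda>n. real n powr (a-1) / (ln (real n) powr p * ln (real n)))"
    by (rule cmul_bigo[OF o3])
  have gO: "G \<in> O(\<lambda>n. real n powr (a-1) / (ln (real n) powr p * ln (real n)))"
    unfolding G_def by (rule sum_in_bigo(1)[OF sum_in_bigo(1)[OF x1 x2] x3])
  have ev: "eventually (\<lambda>n. \<bar>(\<Sum>m=2..n-1. real m powr a / (real (n-m) * real (n-m+1)) * (1 / ln (real m) powr p - 1 / ln (real n) powr p))
            - p * real n powr (a-1) / ln (real n) powr p\<bar> \<le> G n) at_top"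
    using eventually_ge_at_top[of "4::nat"] by eventually_elim (rule key)
  show ?thesis by (rule bound_bigo[OF ev gO])
qed

theorem lemma6p6:
  fixes \<alpha> p :: real
  assumes "\<alpha> > 0" and "p \<ge> 0"
  shows "(\<lambda>n::nat. (\<Sum>m=2..n-1. real m powr \<alpha> /
            (real (n - m) * real (n - m + 1) * ln (real m) powr p))
          - real n powr \<alpha> / ln (real n) powr p *
            (1 - \<alpha> * ln (real n) / real n + (\<alpha> * Digamma \<alpha> + p) / real n))
        \<in> O(\<lambda>n::nat. real n powr \<alpha> / ln (real n) powr p * (1 / (real n * ln (real n))))"
proof -
  note a = assms(1) and p = assms(2)
  define A where "A n = (\<Sum>m=2..n-1. real m powr \<alpha> / (real (n-m) * real (n-m+1)))" for n :: nat
  define T where "T n = real n powr \<alpha> - \<alpha> * real n powr (\<alpha>-1) * ln (real n) + \<alpha> * Digamma \<alpha> * real n powr (\<alpha>-1)" for n :: nat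
  define B where "B n = (\<Sum>m=2..n-1. real m powr \<alpha> / (real (n-m) * real (n-m+1)) * (1 / ln (real m) powr p - 1 / ln (real n) powr p))" for n :: nat
  define Pn where "Pn n = ln (real n) powr p" for n :: nat
  define h where "h n = real n powr \<alpha> / ln (real n) powr p * (1 / (real n * ln (real n)))" for n :: nat
  have fA: "(\<lambda>n. A n - T n) \<in> O(\<lambda>n. real n powr (\<alpha>-1) / ln (real n))"
    using A_part[OF a] unfolding A_def T_def .
  have evP: "eventually (\<lambda>n. Pn n \<noteq> 0) at_top"
    using eventually_ge_at_top[of "2::nat"] by eventually_elim (simp add: Pn_def)
  have f1: "(\<lambda>n. (A n - T n) / Pn n) \<in> O(\<lambda>n. real n powr (\<alpha>-1) / ln (real n) / Pn n)"
    by (rule landau_o.big.divide_right[OF evP fA])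
  have f2: "(\<lambda>n. B n - p * real n powr (\<alpha>-1) / ln (real n) powr p) \<in> O(\<lambda>n. real n powr (\<alpha>-1) / (ln (real n) powr p * ln (real n)))"
    using B_part[OF a p] unfolding B_def .
  have hq: "real n powr (\<alpha>-1) / ln (real n) / Pn n = h n" "real n powr (\<alpha>-1) / (ln (real n) powr p * ln (real n)) = h n"
    if n: "n \<ge> 2" for n
  proof -
    have e: "real n powr (\<alpha>-1) = real n powr \<alpha> / real n" using n by (simp add: powr_diff)
    show "real n powr (\<alpha>-1) / ln (real n) / Pn n = h n" unfolding e by (simp add: h_def Pn_def field_simps)
    show "real n powr (\<alpha>-1) / (ln (real n) powr p * ln (real n)) = h n" unfolding e by (simp add: h_def field_simps)
  qed
  have g1: "(\<lambda>n. real n powr (\<alpha>-1) / ln (real n) / Pn n) \<in> O(h)"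
  proof (rule bigoI[where c=1])
    show "eventually (\<lambda>n. norm (real n powr (\<alpha>-1) / ln (real n) / Pn n) \<le> 1 * norm (h n)) at_top"
      using eventually_ge_at_top[of "2::nat"] by eventually_elim (subst hq(1), assumption, simp)
  qed
  have g2: "(\<lambda>n. real n powr (\<alpha>-1) / (ln (real n) powr p * ln (real n))) \<in> O(h)"
  proof (rule bigoI[where c=1])
    show "eventually (\<lambda>n. norm (real n powr (\<alpha>-1) / (ln (real n) powr p * ln (real n))) \<le> 1 * norm (h n)) at_top"
      using eventually_ge_at_top[of "2::nat"] by eventually_elim (subst hq(2), assumption, simp)
  qed
  have sum: "(\<lambda>n. (A n - T n) / Pn n + (B n - p * real n powr (\<alpha>-1) / ln (real n) powr p)) \<in> O(h)"
    by (rule sum_in_bigo(1)[OF landau_o.big_trans[OF f1 g1] landau_o.big_trans[OF f2 g2]])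
  have eq: "eventually (\<lambda>n. (A n - T n) / Pn n + (B n - p * real n powr (\<alpha>-1) / ln (real n) powr p) =
      (\<Sum>m=2..n-1. real m powr \<alpha> / (real (n - m) * real (n - m + 1) * ln (real m) powr p))
          - real n powr \<alpha> / ln (real n) powr p *
            (1 - \<alpha> * ln (real n) / real n + (\<alpha> * Digamma \<alpha> + p) / real n)) at_top"
    using eventually_ge_at_top[of "2::nat"]
  proof eventually_elim
    case (elim n)
    have P0: "Pn n > 0" using elim by (simp add: Pn_def)
    have n0: "real n > 0" using elim by simp
    have S: "(\<Sum>m=2..n-1. real m powr \<alpha> / (real (n - m) * real (n - m + 1) * ln (real m) powr p)) = A n / Pn n + B n"
    proof -
      have "(\<Sum>m=2..n-1. real m powr \<alpha> / (real (n - m) * real (n - m + 1) * ln (real m) powr p))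
          = (\<Sum>m=2..n-1. real m powr \<alpha> / (real (n-m) * real (n-m+1)) / Pn n + real m powr \<alpha> / (real (n-m) * real (n-m+1)) * (1 / ln (real m) powr p - 1 / ln (real n) powr p))"
      proof (intro sum.cong refl)
        fix m assume m: "m \<in> {2..n-1}"
        define W where "W = real m powr \<alpha> / (real (n-m) * real (n-m+1))"
        have l: "real m powr \<alpha> / (real (n - m) * real (n - m + 1) * ln (real m) powr p) = W * (1 / ln (real m) powr p)"
          by (simp add: W_def divide_inverse mult_ac)
        have r: "W / Pn n + W * (1 / ln (real m) powr p - 1 / ln (real n) powr p) = W * (1 / ln (real m) powr p)"
          by (simp add: Pn_def right_diff_distrib)
        show "real m powr \<alpha> / (real (n - m) * real (n - m + 1) * ln (real m) powr p)
          = real m powr \<alpha> / (real (n-m) * real (n-m+1)) / Pn n + real m powr \<alpha> / (real (n-m) * real (n-m+1)) * (1 / ln (real m) powr p - 1 / ln (real n) powr p)"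
          using l r unfolding W_def by simp
      qed
      also have "\<dots> = A n / Pn n + B n" by (simp add: A_def B_def sum.distrib sum_divide_distrib)
      finally show ?thesis .
    qed
    have e: "real n powr (\<alpha>-1) = real n powr \<alpha> / real n" using n0 by (simp add: powr_diff)
    have R: "real n powr \<alpha> / ln (real n) powr p * (1 - \<alpha> * ln (real n) / real n + (\<alpha> * Digamma \<alpha> + p) / real n)
        = T n / Pn n + p * real n powr (\<alpha>-1) / ln (real n) powr p"
      unfolding T_def Pn_def e using n0 P0 unfolding Pn_def by (simp add: field_simps)
    show ?case unfolding S R by (simp add: diff_divide_distrib algebra_simps)
  qed
  show ?thesis using sum landau_o.big.in_cong[OF eq] unfolding h_def by simp
qed

end
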